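(* Let $n\ge2$ even, $\alpha\in\mathbb{N}$, $\beta>\frac{n+3}{2\alpha}$, let $f\in C^n(\mathbb{R})$ with $f^{(n)}\in L_1(\mathbb{R})$, and let $\xi>0$. Then $$\|K(x)\|_1\le\frac{1}{6\Gamma(\frac{1}{2\alpha})\Gamma(\beta-\frac{1}{2\alpha})(n-1)!}\Big[3\Gamma\left(\tfrac{n+1}{2\alpha}\right)\Gamma\left(\beta-\tfrac{n+1}{2\alpha}\right)+3\Gamma\left(\tfrac{n+2}{2\alpha}\right)\Gamma\left(\beta-\tfrac{n+2}{2\alpha}\right)+\Gamma\left(\tfrac{n+3}{2\alpha}\right)\Gamma\left(\beta-\tfrac{n+3}{2\alpha}\right)\Big]\omega_2(f^{(n)},\xi)_1\,\xi^n.$$ Hence $\|K(x)\|_1\to0$ as $\xi\to0$. If additionally $f^{(2m)}\in L_1(\mathbb{R})$ for $m=1,\dots,\frac n2$, then $\|M_\xi(f)-f\|_1\to0$ as $\xi\to0$.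
   Context: For $\alpha\in\mathbb{N}$, $\beta>\frac{1}{2\alpha}$, $\xi>0$, let $W=\frac{\Gamma(\beta)\alpha\xi^{2\alpha\beta-1}}{\Gamma(\frac{1}{2\alpha})\Gamma(\beta-\frac{1}{2\alpha})}$ and define $M_\xi(f;x)=W\int_{-\infty}^{\infty}f(x+y)\frac{1}{(y^{2\alpha}+\xi^{2\alpha})^{\beta}}dy$, $x\in\mathbb{R}$. Let $$K(x):=M_\xi(f;x)-f(x)-\sum_{\rho=1}^{n/2}\frac{f^{(2\rho)}(x)}{(2\rho)!}\frac{\Gamma(\frac{2\rho+1}{2\alpha})\Gamma(\beta-\frac{2\rho+1}{2\alpha})}{\Gamma(\frac{1}{2\alpha})\Gamma(\beta-\frac{1}{2\alpha})}\xi^{2\rho}.$$ For $g\in L_1(\mathbb{R})$, $\Delta_t^2g(x)=g(x+2t)-2g(x+t)+g(x)$ and $\omega_2(g,h)_1=\sup_{|t|\le h}\|\Delta_t^2g(x)\|_{1,x}$, $h>0$. *)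

theory Defs
  imports "HOL-Analysis.Analysis"
begin

definition nderiv :: "nat \<Rightarrow> (real \<Rightarrow> real) \<Rightarrow> real \<Rightarrow> real" where
  "nderiv k f = (deriv ^^ k) f"

definition Cn :: "nat \<Rightarrow> (real \<Rightarrow> real) \<Rightarrow> bool" where
  "Cn n f \<longleftrightarrow> (\<forall>k<n. nderiv k f differentiable_on UNIV) \<and> continuous_on UNIV (nderiv n f)"

definition Wconst :: "nat \<Rightarrow> real \<Rightarrow> real \<Rightarrow> real" where
  "Wconst \<alpha> \<beta> \<xi> = Gamma \<beta> * real \<alpha> * \<xi> powr (2 * real \<alpha> * \<beta> - 1)
      / (Gamma (1 / (2 * real \<alpha>)) * Gamma (\<beta> - 1 / (2 * real \<alpha>)))"

definition Mxi :: "nat \<Rightarrow> real \<Rightarrow> real \<Rightarrow> (real \<Rightarrow> real) \<Rightarrow> real \<Rightarrow> real" where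
  "Mxi \<alpha> \<beta> \<xi> f x = Wconst \<alpha> \<beta> \<xi> *
      (\<integral>y. f (x + y) * (1 / (y ^ (2 * \<alpha>) + \<xi> ^ (2 * \<alpha>)) powr \<beta>) \<partial>lborel)"

definition Kfun :: "nat \<Rightarrow> nat \<Rightarrow> real \<Rightarrow> real \<Rightarrow> (real \<Rightarrow> real) \<Rightarrow> real \<Rightarrow> real" where
  "Kfun n \<alpha> \<beta> \<xi> f x = Mxi \<alpha> \<beta> \<xi> f x - f x
     - (\<Sum>\<rho>=1..n div 2. nderiv (2 * \<rho>) f x / fact (2 * \<rho>)
          * (Gamma ((2 * real \<rho> + 1) / (2 * real \<alpha>)) * Gamma (\<beta> - (2 * real \<rho> + 1) / (2 * real \<alpha>))
             / (Gamma (1 / (2 * real \<alpha>)) * Gamma (\<beta> - 1 / (2 * real \<alpha>))))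
          * \<xi> ^ (2 * \<rho>))"

definition omega2 :: "(real \<Rightarrow> real) \<Rightarrow> real \<Rightarrow> real" where
  "omega2 g h = (SUP t\<in>{-h..h}. \<integral>x. \<bar>g (x + 2 * t) - 2 * g (x + t) + g x\<bar> \<partial>lborel)"

definition L1norm :: "(real \<Rightarrow> real) \<Rightarrow> ennreal" where
  "L1norm g = (\<integral>\<^sup>+ x. ennreal \<bar>g x\<bar> \<partial>lborel)"

end

theory Submission
  imports Defs
begin


lemma gamma_scaled:
  fixes c z :: real assumes c: "c > 0" and z: "z > 0"
  shows "(\<integral>\<^sup>+t. ennreal (indicator {0..} t * t powr (z - 1) / exp (c * t)) \<partial>lborel)
         = ennreal (Gamma z * c powr (- z))"
proof -
  have "ennreal (Gamma z) = (\<integral>\<^sup>+t. ennreal (indicator {0..} t * t powr (z - 1) / exp t) \<partial>lborel)"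
    using Gamma_conv_nn_integral_real[OF z] .
  also have "\<dots> = ennreal \<bar>c\<bar> * (\<integral>\<^sup>+x. ennreal (indicator {0..} (0 + c * x) * (0 + c * x) powr (z - 1) / exp (0 + c * x)) \<partial>lborel)"
    by (rule nn_integral_real_affine) (use c in auto)
  also have "\<dots> = (\<integral>\<^sup>+x. ennreal (c powr z) * ennreal (indicator {0..} x * x powr (z - 1) / exp (c * x)) \<partial>lborel)"
    using c
    apply (subst nn_integral_cmult[symmetric], simp)
    apply (intro nn_integral_cong)
    apply (auto simp: indicator_def ennreal_mult'[symmetric] powr_mult zero_le_mult_iff powr_diff)
    done
  also have "\<dots> = ennreal (c powr z) * (\<integral>\<^sup>+x. ennreal (indicator {0..} x * x powr (z - 1) / exp (c * x)) \<partial>lborel)"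
    by (rule nn_integral_cmult) simp
  finally have *: "ennreal (Gamma z) = ennreal (c powr z) * (\<integral>\<^sup>+x. ennreal (indicator {0..} x * x powr (z - 1) / exp (c * x)) \<partial>lborel)" .
  have "ennreal (Gamma z * c powr (- z)) = ennreal (c powr (-z)) * ennreal (Gamma z)"
    using c z by (simp add: ennreal_mult'[symmetric] Gamma_real_pos less_imp_le mult.commute)
  also have "\<dots> = ennreal (c powr (-z) * c powr z) * (\<integral>\<^sup>+x. ennreal (indicator {0..} x * x powr (z - 1) / exp (c * x)) \<partial>lborel)"
    by (subst *) (simp add: ennreal_mult'[symmetric] mult.assoc[symmetric])
  also have "c powr (-z) * c powr z = 1" using c by (simp add: powr_minus)
  finally show ?thesis by simp
qed




lemma beta_inf:
  fixes a b :: real assumes a: "a > 0" and ab: "a < b"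
  shows "(\<integral>\<^sup>+v. ennreal (indicator {0..} v * v powr (a - 1) / (1 + v) powr b) \<partial>lborel)
         = ennreal (Gamma a * Gamma (b - a) / Gamma b)"
proof -
  have b: "b > 0" using a ab by simp
  define G where "G = (\<lambda>v s::real. ennreal (indicator {0..} v * v powr (a - 1) *
        (indicator {0..} s * s powr (b - 1) / exp ((1 + v) * s))))"
  have G_meas[measurable]: "case_prod G \<in> borel_measurable (lborel \<Otimes>\<^sub>M lborel)"
    unfolding G_def by measurable
  have step1: "ennreal (Gamma b) * ennreal (indicator {0..} v * v powr (a - 1) / (1 + v) powr b)
      = (\<integral>\<^sup>+s. G v s \<partial>lborel)" for v
  proof (cases "v \<ge> 0")
    case True
    have "(\<integral>\<^sup>+s. G v s \<partial>lborel) = (\<integral>\<^sup>+s. ennreal (v powr (a - 1)) *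
        ennreal (indicator {0..} s * s powr (b - 1) / exp ((1 + v) * s)) \<partial>lborel)"
      unfolding G_def using True
      by (intro nn_integral_cong) (simp add: ennreal_mult'[symmetric])
    also have "\<dots> = ennreal (v powr (a - 1)) * ennreal (Gamma b * (1 + v) powr (- b))"
      using True b by (subst nn_integral_cmult) (simp_all add: gamma_scaled)
    also have "\<dots> = ennreal (Gamma b) * ennreal (indicator {0..} v * v powr (a - 1) / (1 + v) powr b)"
      using True b
      by (simp add: ennreal_mult'[symmetric] Gamma_real_pos less_imp_le powr_minus divide_inverse mult_ac)
    finally show ?thesis by simp
  next
    case False
    then show ?thesis unfolding G_def by simp
  qed
  have step2: "(\<integral>\<^sup>+v. G v s \<partial>lborel) = ennreal (Gamma a * (indicator {0..} s * s powr (b - a - 1) / exp s))"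
    if s: "s \<noteq> 0" for s
  proof (cases "s > 0")
    case True
    have "(\<integral>\<^sup>+v. G v s \<partial>lborel) = (\<integral>\<^sup>+v. ennreal (s powr (b - 1) / exp s) *
        ennreal (indicator {0..} v * v powr (a - 1) / exp (s * v)) \<partial>lborel)"
      unfolding G_def using True
      by (intro nn_integral_cong)
         (simp add: ennreal_mult'[symmetric] exp_add[symmetric] algebra_simps indicator_def)
    also have "\<dots> = ennreal (s powr (b - 1) / exp s) * ennreal (Gamma a * s powr (- a))"
      using True a by (subst nn_integral_cmult) (simp_all add: gamma_scaled)
    also have "\<dots> = ennreal (Gamma a * (indicator {0..} s * s powr (b - a - 1) / exp s))"
      using True a
      by (simp add: ennreal_mult'[symmetric] Gamma_real_pos less_imp_le powr_minus powr_diff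
          divide_inverse mult_ac powr_add)
    finally show ?thesis .
  next
    case False
    then have "s < 0" using s by simp
    then show ?thesis unfolding G_def by simp
  qed
  have "ennreal (Gamma b) * (\<integral>\<^sup>+v. ennreal (indicator {0..} v * v powr (a - 1) / (1 + v) powr b) \<partial>lborel)
      = (\<integral>\<^sup>+v. \<integral>\<^sup>+s. G v s \<partial>lborel \<partial>lborel)"
    by (subst nn_integral_cmult[symmetric]) (simp_all add: step1)
  also have "\<dots> = (\<integral>\<^sup>+s. \<integral>\<^sup>+v. G v s \<partial>lborel \<partial>lborel)"
    by (rule lborel_pair.Fubini'[symmetric]) simp
  also have "\<dots> = (\<integral>\<^sup>+s. ennreal (Gamma a * (indicator {0..} s * s powr (b - a - 1) / exp s)) \<partial>lborel)"
    by (intro nn_integral_cong_AE eventually_mono[OF AE_lborel_singleton[of 0]]) (simp add: step2)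
  also have "\<dots> = ennreal (Gamma a) * (\<integral>\<^sup>+s. ennreal (indicator {0..} s * s powr (b - a - 1) / exp s) \<partial>lborel)"
    using a by (subst nn_integral_cmult[symmetric]) (simp_all add: ennreal_mult'[symmetric] Gamma_real_pos less_imp_le)
  also have "\<dots> = ennreal (Gamma a * Gamma (b - a))"
    using a ab by (simp add: Gamma_conv_nn_integral_real[symmetric] ennreal_mult'[symmetric] Gamma_real_pos less_imp_le)
  finally have *: "ennreal (Gamma b) * (\<integral>\<^sup>+v. ennreal (indicator {0..} v * v powr (a - 1) / (1 + v) powr b) \<partial>lborel)
      = ennreal (Gamma a * Gamma (b - a))" .
  have gb: "Gamma b > 0" using b by (simp add: Gamma_real_pos)
  have "(\<integral>\<^sup>+v. ennreal (indicator {0..} v * v powr (a - 1) / (1 + v) powr b) \<partial>lborel)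
      = ennreal (1 / Gamma b) * (ennreal (Gamma b) * (\<integral>\<^sup>+v. ennreal (indicator {0..} v * v powr (a - 1) / (1 + v) powr b) \<partial>lborel))"
    using gb by (simp add: mult.assoc[symmetric] ennreal_mult'[symmetric])
  also have "\<dots> = ennreal (Gamma a * Gamma (b - a) / Gamma b)"
    unfolding * using a ab gb by (simp add: ennreal_mult'[symmetric] Gamma_real_pos less_imp_le)
  finally show ?thesis .
qed



lemma nn_int_Ici_SUP:
  fixes F :: "real \<Rightarrow> ennreal" and c :: "nat \<Rightarrow> real"
  assumes F[measurable]: "F \<in> borel_measurable borel" and c: "incseq c" "filterlim c at_top sequentially"
  shows "(\<integral>\<^sup>+x. F x * indicator {0..} x \<partial>lborel) = (SUP N. \<integral>\<^sup>+x. F x * indicator {0..c N} x \<partial>lborel)"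
proof -
  have "(\<integral>\<^sup>+x. F x * indicator {0..} x \<partial>lborel) = (\<integral>\<^sup>+x. (SUP N. F x * indicator {0..c N} x) \<partial>lborel)"
  proof (intro nn_integral_cong)
    fix x :: real
    show "F x * indicator {0..} x = (SUP N. F x * indicator {0..c N} x)"
    proof (cases "x \<ge> 0")
      case True
      from c(2) have "eventually (\<lambda>N. c N \<ge> x) sequentially"
        by (simp add: filterlim_at_top)
      then obtain N where N: "c N \<ge> x" by (auto simp: eventually_sequentially)
      show ?thesis
      proof (rule antisym)
        show "F x * indicator {0..} x \<le> (SUP N. F x * indicator {0..c N} x)"
          by (rule SUP_upper2[of N]) (use True N in auto)
        show "(SUP N. F x * indicator {0..c N} x) \<le> F x * indicator {0..} x"
          by (rule SUP_least) (auto simp: indicator_def)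
      qed
    qed simp
  qed
  also have "\<dots> = (SUP N. \<integral>\<^sup>+x. F x * indicator {0..c N} x \<partial>lborel)"
  proof (rule nn_integral_monotone_convergence_SUP)
    show "incseq (\<lambda>N x. F x * indicator {0..c N} x)"
      using c(1) apply (auto simp: incseq_def le_fun_def indicator_def intro!: mult_left_mono)
      by (meson order_trans)
  qed simp
  finally show ?thesis .
qed

lemma power_subst:
  fixes h :: "real \<Rightarrow> real" and m :: nat
  assumes m: "m \<ge> 1" and h[measurable]: "h \<in> borel_measurable borel" and hpos: "\<And>v. v \<ge> 0 \<Longrightarrow> h v \<ge> 0"
  shows "(\<integral>\<^sup>+v. ennreal (h v) * indicator {0..} v \<partial>lborel)
       = (\<integral>\<^sup>+u. ennreal (h (u^m) * (real m * u^(m-1))) * indicator {0..} u \<partial>lborel)"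
proof -
  have inc1: "incseq (\<lambda>N::nat. real N ^ m)"
    by (auto simp: incseq_def intro!: power_mono)
  have lim1: "filterlim (\<lambda>N::nat. real N ^ m) at_top sequentially"
    using m by (intro filterlim_pow_at_top filterlim_real_sequentially) auto
  have inc2: "incseq (\<lambda>N::nat. real N)" by (auto simp: incseq_def)
  have eqN: "(\<integral>\<^sup>+v. ennreal (h v) * indicator {0..real N ^ m} v \<partial>lborel)
       = (\<integral>\<^sup>+u. ennreal (h (u^m) * (real m * u^(m-1))) * indicator {0..real N} u \<partial>lborel)" for N :: nat
  proof -
    have "(\<integral>\<^sup>+v. ennreal (h v) * indicator {0..real N ^ m} v \<partial>lborel)
        = (\<integral>\<^sup>+v. ennreal (h v * indicator {(\<lambda>u. u^m) 0..(\<lambda>u. u^m) (real N)} v) \<partial>lborel)"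
      using m by (intro nn_integral_cong) (auto simp: indicator_def power_0_left)
    also have "\<dots> = (\<integral>\<^sup>+u. ennreal (h (u^m) * (real m * u^(m-1)) * indicator {0..real N} u) \<partial>lborel)"
    proof (rule nn_integral_substitution)
      show "set_borel_measurable borel {(\<lambda>u. u^m) 0..(\<lambda>u. u^m) (real N)} h"
        by (simp add: set_borel_measurable_def)
      show "((\<lambda>u. u^m) has_real_derivative real m * x^(m-1)) (at x)" for x :: real
        by (rule derivative_eq_intros refl | simp)+
      show "continuous_on {0..real N} (\<lambda>x. real m * x^(m-1))"
        by (intro continuous_intros)
    qed auto
    also have "\<dots> = (\<integral>\<^sup>+u. ennreal (h (u^m) * (real m * u^(m-1))) * indicator {0..real N} u \<partial>lborel)"
      by (intro nn_integral_cong) (auto simp: indicator_def)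
    finally show ?thesis .
  qed
  show ?thesis
    by (subst nn_int_Ici_SUP[OF _ inc1 lim1], simp)
       (subst nn_int_Ici_SUP[OF _ inc2 filterlim_real_sequentially], simp_all add: eqN)
qed



definition kern :: "nat \<Rightarrow> real \<Rightarrow> real \<Rightarrow> real \<Rightarrow> real" where
  "kern \<alpha> \<beta> \<xi> y = 1 / (y ^ (2 * \<alpha>) + \<xi> ^ (2 * \<alpha>)) powr \<beta>"

lemma Mxi_kern: "Mxi \<alpha> \<beta> \<xi> f x = Wconst \<alpha> \<beta> \<xi> * (\<integral>y. f (x + y) * kern \<alpha> \<beta> \<xi> y \<partial>lborel)"
  unfolding Mxi_def kern_def ..

lemma kern_meas[measurable]: "kern \<alpha> \<beta> \<xi> \<in> borel_measurable borel"
  unfolding kern_def by measurable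

lemma even_pow_nonneg: "(y::real) ^ (2 * a) \<ge> 0"
  by (simp add: power_mult)

lemma kern_alt: assumes "\<xi> > 0" shows "kern \<alpha> \<beta> \<xi> y = (y ^ (2 * \<alpha>) + \<xi> ^ (2 * \<alpha>)) powr (- \<beta>)"
proof -
  have "y ^ (2 * \<alpha>) + \<xi> ^ (2 * \<alpha>) > 0" using assms even_pow_nonneg[of y \<alpha>] by (simp add: add_nonneg_pos)
  then show ?thesis unfolding kern_def by (simp add: powr_minus divide_inverse powr_divide)
qed

lemma kern_base_pos: fixes y \<xi> :: real assumes "\<xi> > 0" shows "y ^ (2 * \<alpha>) + \<xi> ^ (2 * \<alpha>) > 0"
  using assms by (intro add_nonneg_pos) (simp_all add: power_mult)

lemma kern_pos: assumes "\<xi> > 0" shows "kern \<alpha> \<beta> \<xi> y > 0"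
  using assms kern_base_pos[OF assms, of y \<alpha>] by (simp add: kern_alt)

lemma kern_even: "kern \<alpha> \<beta> \<xi> (- y) = kern \<alpha> \<beta> \<xi> y"
  unfolding kern_def by (simp add: power_mult)

lemma moment:
  fixes j :: nat
  assumes \<alpha>: "\<alpha> \<ge> 1" and \<xi>: "\<xi> > 0" and jb: "real j + 1 < 2 * real \<alpha> * \<beta>"
  shows "(\<integral>\<^sup>+y. ennreal (y ^ j * kern \<alpha> \<beta> \<xi> y) * indicator {0..} y \<partial>lborel)
    = ennreal (\<xi> powr (real j + 1 - 2 * real \<alpha> * \<beta>)
        * Gamma ((real j + 1) / (2 * real \<alpha>)) * Gamma (\<beta> - (real j + 1) / (2 * real \<alpha>))
        / (2 * real \<alpha> * Gamma \<beta>))"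
proof -
  define A where "A = (real j + 1) / (2 * real \<alpha>)"
  have A0: "A > 0" using \<alpha> by (simp add: A_def)
  have Ab: "A < \<beta>" using \<alpha> jb by (simp add: A_def field_simps)
  have b0: "\<beta> > 0" using A0 Ab by simp
  define k1 where "k1 = (\<lambda>u::real. (u ^ (2 * \<alpha>) + 1) powr (- \<beta>))"
  define h where "h = (\<lambda>v::real. v powr (A - 1) / (1 + v) powr \<beta>)"
  have scale: "(\<integral>\<^sup>+y. ennreal (y ^ j * kern \<alpha> \<beta> \<xi> y) * indicator {0..} y \<partial>lborel)
      = ennreal (\<xi> * \<xi> powr (real j - 2 * real \<alpha> * \<beta>)) * (\<integral>\<^sup>+u. ennreal (u ^ j * k1 u) * indicator {0..} u \<partial>lborel)"
  proof -
    have "(\<integral>\<^sup>+y. ennreal (y ^ j * kern \<alpha> \<beta> \<xi> y) * indicator {0..} y \<partial>lborel)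
      = ennreal \<bar>\<xi>\<bar> * (\<integral>\<^sup>+u. ennreal ((0 + \<xi> * u) ^ j * kern \<alpha> \<beta> \<xi> (0 + \<xi> * u)) * indicator {0..} (0 + \<xi> * u) \<partial>lborel)"
      by (rule nn_integral_real_affine) (use \<xi> in auto)
    also have "\<dots> = ennreal \<xi> * (\<integral>\<^sup>+u. ennreal (\<xi> powr (real j - 2 * real \<alpha> * \<beta>)) * (ennreal (u ^ j * k1 u) * indicator {0..} u) \<partial>lborel)"
    proof -
      have "ennreal ((\<xi> * u) ^ j * kern \<alpha> \<beta> \<xi> (\<xi> * u)) * indicator {0..} (\<xi> * u)
          = ennreal (\<xi> powr (real j - 2 * real \<alpha> * \<beta>)) * (ennreal (u ^ j * k1 u) * indicator {0..} u)" for u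
      proof (cases "u \<ge> 0")
        case True
        have pos: "u ^ (2 * \<alpha>) + 1 > 0" by (rule add_nonneg_pos[OF even_pow_nonneg]) simp
        have "(\<xi> * u) ^ (2 * \<alpha>) + \<xi> ^ (2 * \<alpha>) = \<xi> ^ (2 * \<alpha>) * (u ^ (2 * \<alpha>) + 1)"
          by (simp add: power_mult_distrib algebra_simps)
        then have "kern \<alpha> \<beta> \<xi> (\<xi> * u) = (\<xi> ^ (2 * \<alpha>)) powr (- \<beta>) * k1 u"
          using \<xi> pos by (simp add: kern_alt k1_def powr_mult)
        also have "(\<xi> ^ (2 * \<alpha>)) powr (- \<beta>) = \<xi> powr (- 2 * real \<alpha> * \<beta>)"
          using \<xi> by (simp add: powr_realpow[symmetric] powr_powr)
        finally have "(\<xi> * u) ^ j * kern \<alpha> \<beta> \<xi> (\<xi> * u) = \<xi> powr (real j - 2 * real \<alpha> * \<beta>) * (u ^ j * k1 u)"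
          using \<xi> by (simp add: power_mult_distrib powr_diff powr_realpow[symmetric] powr_minus divide_inverse mult_ac)
        moreover have "k1 u \<ge> 0" by (simp add: k1_def)
        ultimately show ?thesis using True \<xi> by (simp add: ennreal_mult'[symmetric] zero_le_mult_iff)
      next
        case False
        then have "\<xi> * u < 0" using \<xi> by (simp add: mult_pos_neg)
        then show ?thesis using False by simp
      qed
      then show ?thesis using \<xi> by simp
    qed
    also have "\<dots> = ennreal (\<xi> * \<xi> powr (real j - 2 * real \<alpha> * \<beta>)) * (\<integral>\<^sup>+u. ennreal (u ^ j * k1 u) * indicator {0..} u \<partial>lborel)"
      using \<xi> by (subst nn_integral_cmult) (auto simp: ennreal_mult'[symmetric] mult.assoc[symmetric] k1_def)
    finally show ?thesis .
  qed
  have sub: "(\<integral>\<^sup>+u. ennreal (u ^ j * k1 u) * indicator {0..} u \<partial>lborel)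
      = ennreal (1 / (2 * real \<alpha>)) * (\<integral>\<^sup>+v. ennreal (h v) * indicator {0..} v \<partial>lborel)"
  proof -
    have "(\<integral>\<^sup>+u. ennreal (u ^ j * k1 u) * indicator {0..} u \<partial>lborel)
      = (\<integral>\<^sup>+u. ennreal (1 / (2 * real \<alpha>)) * (ennreal (h (u ^ (2 * \<alpha>)) * (real (2 * \<alpha>) * u ^ (2 * \<alpha> - 1))) * indicator {0..} u) \<partial>lborel)"
    proof (intro nn_integral_cong_AE eventually_mono[OF AE_lborel_singleton[of 0]], goal_cases)
      case (1 u)
      show ?case
      proof (cases "u > 0")
        case True
        have "h (u ^ (2 * \<alpha>)) * (real (2 * \<alpha>) * u ^ (2 * \<alpha> - 1))
            = (2 * real \<alpha>) * (u powr (2 * real \<alpha> * (A - 1)) * u powr (2 * real \<alpha> - 1)) * k1 u"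
          using True \<alpha> unfolding h_def k1_def
          by (simp add: powr_realpow[symmetric] powr_powr powr_minus divide_inverse add.commute of_nat_diff)
        also have "u powr (2 * real \<alpha> * (A - 1)) * u powr (2 * real \<alpha> - 1) = u ^ j"
          using True \<alpha> by (simp add: powr_add[symmetric] A_def field_simps powr_realpow[symmetric])
        finally have "h (u ^ (2 * \<alpha>)) * (real (2 * \<alpha>) * u ^ (2 * \<alpha> - 1)) = 2 * real \<alpha> * (u ^ j * k1 u)"
          by simp
        moreover have "k1 u \<ge> 0" by (simp add: k1_def)
        ultimately show ?thesis using True \<alpha> by (simp add: ennreal_mult'[symmetric] zero_le_mult_iff)
      next
        case False
        then show ?thesis using 1 by (simp add: indicator_def)
      qed
    qed
    also have "\<dots> = ennreal (1 / (2 * real \<alpha>)) * (\<integral>\<^sup>+u. ennreal (h (u ^ (2 * \<alpha>)) * (real (2 * \<alpha>) * u ^ (2 * \<alpha> - 1))) * indicator {0..} u \<partial>lborel)"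
      by (rule nn_integral_cmult) (simp add: h_def)
    also have "(\<integral>\<^sup>+u. ennreal (h (u ^ (2 * \<alpha>)) * (real (2 * \<alpha>) * u ^ (2 * \<alpha> - 1))) * indicator {0..} u \<partial>lborel)
        = (\<integral>\<^sup>+v. ennreal (h v) * indicator {0..} v \<partial>lborel)"
      by (rule power_subst[symmetric]) (use \<alpha> in \<open>auto simp: h_def\<close>)
    finally show ?thesis .
  qed
  have bet: "(\<integral>\<^sup>+v. ennreal (h v) * indicator {0..} v \<partial>lborel) = ennreal (Gamma A * Gamma (\<beta> - A) / Gamma \<beta>)"
    by (subst beta_inf[OF A0 Ab, symmetric]) (auto intro!: nn_integral_cong simp: h_def indicator_def)
  show ?thesis
    unfolding scale sub bet using \<xi> \<alpha> A0 Ab b0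
    by (simp add: ennreal_mult'[symmetric] A_def[symmetric] Gamma_real_pos less_imp_le powr_add powr_diff)
qed




lemma nderiv_0[simp]: "nderiv 0 f = f" by (simp add: nderiv_def)
lemma nderiv_Suc: "nderiv (Suc k) f = deriv (nderiv k f)" by (simp add: nderiv_def)

lemma Cn_deriv:
  assumes "Cn n f" "k < n"
  shows "(nderiv k f has_real_derivative nderiv (Suc k) f x) (at x)"
proof -
  have "nderiv k f differentiable_on UNIV" using assms unfolding Cn_def by auto
  then have "nderiv k f differentiable (at x)"
    by (simp add: differentiable_on_def)
  then show ?thesis unfolding nderiv_Suc by (simp add: DERIV_deriv_iff_real_differentiable)
qed

lemma Cn_cont:
  assumes "Cn n f" "k \<le> n"
  shows "continuous_on UNIV (nderiv k f)"
proof (cases "k = n")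
  case True then show ?thesis using assms unfolding Cn_def by auto
next
  case False
  then have "k < n" using assms by simp
  then have "nderiv k f differentiable_on UNIV" using assms unfolding Cn_def by auto
  then show ?thesis by (rule differentiable_imp_continuous_on)
qed

lemma Cn_isCont: assumes "Cn n f" "k \<le> n" shows "isCont (nderiv k f) x"
  using Cn_cont[OF assms] by (simp add: continuous_on_eq_continuous_at)

lemma taylor_one:
  fixes \<sigma> y x :: real
  assumes Cn: "Cn n f" and n: "n > 0" and y: "y \<ge> 0" and \<sigma>: "\<sigma> = 1 \<or> \<sigma> = -1"
  shows "((\<lambda>t. (y - t) ^ (n - 1) / fact (n - 1) * (\<sigma> ^ n * nderiv n f (x + \<sigma> * t)))
     has_integral f (x + \<sigma> * y) - (\<Sum>i<n. y ^ i / fact i * (\<sigma> ^ i * nderiv i f x))) {0..y}"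
proof -
  define Df where "Df = (\<lambda>m t. \<sigma> ^ m * nderiv m f (x + \<sigma> * t))"
  have "((\<lambda>t. ((y - t) ^ (n - 1) / fact (n - 1)) *\<^sub>R Df n t) has_integral
        Df 0 y - (\<Sum>i<n. ((y - 0) ^ i / fact i) *\<^sub>R Df i 0)) {0..y}"
  proof (rule Taylor_has_integral[OF n])
    show "Df 0 = Df 0" ..
    fix m t assume m: "m < n" and t: "0 \<le> t" "t \<le> y"
    have d: "(nderiv m f has_real_derivative nderiv (Suc m) f (x + \<sigma> * t)) (at (x + \<sigma> * t))"
      by (rule Cn_deriv[OF Cn m])
    have g: "((\<lambda>t. x + \<sigma> * t) has_real_derivative \<sigma>) (at t)"
      by (auto intro!: derivative_eq_intros)
    have "((\<lambda>t. \<sigma> ^ m * nderiv m f (x + \<sigma> * t)) has_real_derivative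
           \<sigma> ^ m * (nderiv (Suc m) f (x + \<sigma> * t) * \<sigma>)) (at t)"
      by (intro DERIV_cmult) (use DERIV_chain2[OF d g] in simp)
    then have "(Df m has_real_derivative Df (Suc m) t) (at t)"
      unfolding Df_def by (simp add: mult_ac)
    then show "(Df m has_vector_derivative Df (Suc m) t) (at t within {0..y})"
      by (simp add: has_real_derivative_iff_has_vector_derivative has_vector_derivative_at_within)
  qed (use y in auto)
  then show ?thesis unfolding Df_def by (simp add: mult_ac)
qed




lemma poly_kernel_integral:
  fixes y :: real assumes n: "n > 0" and y: "y \<ge> 0"
  shows "((\<lambda>t. (y - t) ^ (n - 1) / fact (n - 1)) has_integral y ^ n / fact n) {0..y}"
proof -
  define F where "F = (\<lambda>t::real. - ((y - t) ^ n) / fact n)"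
  have "((\<lambda>t. (y - t) ^ (n - 1) / fact (n - 1)) has_integral (F y - F 0)) {0..y}"
  proof (rule fundamental_theorem_of_calculus[OF y])
    fix t assume t: "t \<in> {0..y}"
    have "(F has_real_derivative
           - (real n * (y - t) ^ (n - 1) * (0 - 1)) / fact n) (at t)"
      unfolding F_def by (auto intro!: derivative_eq_intros)
    also have "- (real n * (y - t) ^ (n - 1) * (0 - 1)) / fact n = (y - t) ^ (n - 1) / fact (n - 1)"
      using n by (simp add: fact_reduce[of n])
    finally show "(F has_vector_derivative (y - t) ^ (n - 1) / fact (n - 1)) (at t within {0..y})"
      by (simp add: has_real_derivative_iff_has_vector_derivative has_vector_derivative_at_within)
  qed
  then show ?thesis using n by (simp add: F_def power_0_left)
qed

definition Rm :: "nat \<Rightarrow> (real \<Rightarrow> real) \<Rightarrow> real \<Rightarrow> real \<Rightarrow> real" where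
  "Rm n f x y = f (x + y) + f (x - y) - 2 * nderiv n f x * y ^ n / fact n
     - (\<Sum>i<n. y ^ i / fact i * ((1 + (-1) ^ i) * nderiv i f x))"

definition Dsym :: "(real \<Rightarrow> real) \<Rightarrow> real \<Rightarrow> real \<Rightarrow> real" where
  "Dsym g x t = g (x + t) + g (x - t) - 2 * g x"

lemma taylor_sym:
  fixes y x :: real
  assumes Cn: "Cn n f" and n: "n > 0" "even n" and y: "y \<ge> 0"
  shows "((\<lambda>t. (y - t) ^ (n - 1) / fact (n - 1) * Dsym (nderiv n f) x t) has_integral Rm n f x y) {0..y}"
proof -
  have A: "((\<lambda>t. (y - t) ^ (n - 1) / fact (n - 1) * (1 ^ n * nderiv n f (x + 1 * t)))
     has_integral f (x + 1 * y) - (\<Sum>i<n. y ^ i / fact i * (1 ^ i * nderiv i f x))) {0..y}"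
    by (rule taylor_one[OF Cn n(1) y]) simp
  have B: "((\<lambda>t. (y - t) ^ (n - 1) / fact (n - 1) * ((-1) ^ n * nderiv n f (x + (-1) * t)))
     has_integral f (x + (-1) * y) - (\<Sum>i<n. y ^ i / fact i * ((-1) ^ i * nderiv i f x))) {0..y}"
    by (rule taylor_one[OF Cn n(1) y]) simp
  have C: "((\<lambda>t. (y - t) ^ (n - 1) / fact (n - 1) * (2 * nderiv n f x)) has_integral
      y ^ n / fact n * (2 * nderiv n f x)) {0..y}"
    by (rule has_integral_mult_left[OF poly_kernel_integral[OF n(1) y]])
  have D: "((\<lambda>t. (y - t) ^ (n - 1) / fact (n - 1) * (1 ^ n * nderiv n f (x + 1 * t))
      + (y - t) ^ (n - 1) / fact (n - 1) * ((-1) ^ n * nderiv n f (x + (-1) * t))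
      - (y - t) ^ (n - 1) / fact (n - 1) * (2 * nderiv n f x)) has_integral
      (f (x + 1 * y) - (\<Sum>i<n. y ^ i / fact i * (1 ^ i * nderiv i f x)))
      + (f (x + (-1) * y) - (\<Sum>i<n. y ^ i / fact i * ((-1) ^ i * nderiv i f x)))
      - y ^ n / fact n * (2 * nderiv n f x)) {0..y}"
    by (intro has_integral_diff has_integral_add A B C)
  have e1: "(\<lambda>t. (y - t) ^ (n - 1) / fact (n - 1) * (1 ^ n * nderiv n f (x + 1 * t))
      + (y - t) ^ (n - 1) / fact (n - 1) * ((-1) ^ n * nderiv n f (x + (-1) * t))
      - (y - t) ^ (n - 1) / fact (n - 1) * (2 * nderiv n f x))
      = (\<lambda>t. (y - t) ^ (n - 1) / fact (n - 1) * Dsym (nderiv n f) x t)"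
    using n(2) by (auto simp: Dsym_def fun_eq_iff field_simps)
  have e2: "(f (x + 1 * y) - (\<Sum>i<n. y ^ i / fact i * (1 ^ i * nderiv i f x)))
      + (f (x + (-1) * y) - (\<Sum>i<n. y ^ i / fact i * ((-1) ^ i * nderiv i f x)))
      - y ^ n / fact n * (2 * nderiv n f x) = Rm n f x y"
    unfolding Rm_def by (simp add: algebra_simps sum.distrib[symmetric])
  show ?thesis using D unfolding e1 e2 .
qed




lemma hk_abs_le:
  fixes \<phi> :: "real \<Rightarrow> real"
  assumes I: "(\<phi> has_integral I) {a..b}" and c: "continuous_on {a..b} \<phi>"
  shows "ennreal \<bar>I\<bar> \<le> (\<integral>\<^sup>+t. ennreal \<bar>\<phi> t\<bar> * indicator {a..b} t \<partial>lborel)"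
proof -
  have si: "set_integrable lborel {a..b} \<phi>" by (rule borel_integrable_atLeastAtMost'[OF c])
  have "(LINT x:{a..b}|lborel. \<phi> x) = integral {a..b} \<phi>"
    by (rule set_borel_integral_eq_integral(2)[OF si])
  also have "\<dots> = I" using I by (rule integral_unique)
  finally have eq: "(LINT x:{a..b}|lborel. \<phi> x) = I" .
  have "ennreal \<bar>I\<bar> = ennreal (norm (integral\<^sup>L lborel (\<lambda>x. indicator {a..b} x *\<^sub>R \<phi> x)))"
    using eq by (simp add: set_lebesgue_integral_def)
  also have "\<dots> \<le> (\<integral>\<^sup>+x. norm (indicator {a..b} x *\<^sub>R \<phi> x) \<partial>lborel)"
    by (rule integral_norm_bound_ennreal) (use si in \<open>simp add: set_integrable_def\<close>)
  also have "\<dots> = (\<integral>\<^sup>+t. ennreal \<bar>\<phi> t\<bar> * indicator {a..b} t \<partial>lborel)"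
    by (intro nn_integral_cong) (auto simp: indicator_def)
  finally show ?thesis .
qed

lemma Rm_bound:
  fixes x y :: real
  assumes Cn: "Cn n f" and n: "n > 0" "even n" and y: "y \<ge> 0"
  shows "ennreal \<bar>Rm n f x y\<bar> \<le> ennreal (y ^ (n - 1) / fact (n - 1)) *
          (\<integral>\<^sup>+t. ennreal \<bar>Dsym (nderiv n f) x t\<bar> * indicator {0..y} t \<partial>lborel)"
proof -
  have gc: "continuous_on UNIV (nderiv n f)" by (rule Cn_cont[OF Cn le_refl])
  have gm[measurable]: "nderiv n f \<in> borel_measurable borel" by (rule borel_measurable_continuous_onI[OF gc])
  have "ennreal \<bar>Rm n f x y\<bar> \<le> (\<integral>\<^sup>+t. ennreal \<bar>(y - t) ^ (n - 1) / fact (n - 1) * Dsym (nderiv n f) x t\<bar> * indicator {0..y} t \<partial>lborel)"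
  proof (rule hk_abs_le[OF taylor_sym[OF Cn n y]])
    show "continuous_on {0..y} (\<lambda>t. (y - t) ^ (n - 1) / fact (n - 1) * Dsym (nderiv n f) x t)"
      unfolding Dsym_def
      by (intro continuous_intros continuous_on_compose2[OF gc]) auto
  qed
  also have "\<dots> \<le> (\<integral>\<^sup>+t. ennreal (y ^ (n - 1) / fact (n - 1)) * (ennreal \<bar>Dsym (nderiv n f) x t\<bar> * indicator {0..y} t) \<partial>lborel)"
  proof (intro nn_integral_mono)
    fix t :: real
    show "ennreal \<bar>(y - t) ^ (n - 1) / fact (n - 1) * Dsym (nderiv n f) x t\<bar> * indicator {0..y} t
        \<le> ennreal (y ^ (n - 1) / fact (n - 1)) * (ennreal \<bar>Dsym (nderiv n f) x t\<bar> * indicator {0..y} t)"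
    proof (cases "t \<in> {0..y}")
      case True
      then have "\<bar>(y - t) ^ (n - 1) / fact (n - 1) * Dsym (nderiv n f) x t\<bar>
          \<le> y ^ (n - 1) / fact (n - 1) * \<bar>Dsym (nderiv n f) x t\<bar>"
        by (auto simp: abs_mult intro!: mult_right_mono divide_right_mono power_mono)
      then show ?thesis using True y
        by (simp add: ennreal_mult'[symmetric] ennreal_leI)
    qed simp
  qed
  also have "\<dots> = ennreal (y ^ (n - 1) / fact (n - 1)) *
          (\<integral>\<^sup>+t. ennreal \<bar>Dsym (nderiv n f) x t\<bar> * indicator {0..y} t \<partial>lborel)"
    by (intro nn_integral_cmult) (unfold Dsym_def, measurable)
  finally show ?thesis .
qed

lemma one_sided_bound:
  fixes x y \<sigma> :: real
  assumes Cn: "Cn n f" and n: "n > 0" and y: "y \<ge> 0" and \<sigma>: "\<sigma> = 1 \<or> \<sigma> = -1"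
  shows "ennreal \<bar>f (x + \<sigma> * y) - (\<Sum>i<n. y ^ i / fact i * (\<sigma> ^ i * nderiv i f x))\<bar>
     \<le> ennreal (y ^ (n - 1) / fact (n - 1)) * L1norm (nderiv n f)"
proof -
  have gc: "continuous_on UNIV (nderiv n f)" by (rule Cn_cont[OF Cn le_refl])
  have gm[measurable]: "nderiv n f \<in> borel_measurable borel" by (rule borel_measurable_continuous_onI[OF gc])
  have s1: "\<bar>\<sigma>\<bar> = 1" using \<sigma> by auto
  have "ennreal \<bar>f (x + \<sigma> * y) - (\<Sum>i<n. y ^ i / fact i * (\<sigma> ^ i * nderiv i f x))\<bar>
      \<le> (\<integral>\<^sup>+t. ennreal \<bar>(y - t) ^ (n - 1) / fact (n - 1) * (\<sigma> ^ n * nderiv n f (x + \<sigma> * t))\<bar> * indicator {0..y} t \<partial>lborel)"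
  proof (rule hk_abs_le[OF taylor_one[OF Cn n y \<sigma>]])
    show "continuous_on {0..y} (\<lambda>t. (y - t) ^ (n - 1) / fact (n - 1) * (\<sigma> ^ n * nderiv n f (x + \<sigma> * t)))"
      by (intro continuous_intros continuous_on_compose2[OF gc]) auto
  qed
  also have "\<dots> \<le> (\<integral>\<^sup>+t. ennreal (y ^ (n - 1) / fact (n - 1)) * ennreal \<bar>nderiv n f (x + \<sigma> * t)\<bar> \<partial>lborel)"
  proof (intro nn_integral_mono)
    fix t :: real
    show "ennreal \<bar>(y - t) ^ (n - 1) / fact (n - 1) * (\<sigma> ^ n * nderiv n f (x + \<sigma> * t))\<bar> * indicator {0..y} t
        \<le> ennreal (y ^ (n - 1) / fact (n - 1)) * ennreal \<bar>nderiv n f (x + \<sigma> * t)\<bar>"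
    proof (cases "t \<in> {0..y}")
      case True
      then have "\<bar>(y - t) ^ (n - 1) / fact (n - 1) * (\<sigma> ^ n * nderiv n f (x + \<sigma> * t))\<bar>
          \<le> y ^ (n - 1) / fact (n - 1) * \<bar>nderiv n f (x + \<sigma> * t)\<bar>"
        using s1 by (auto simp: abs_mult power_abs intro!: mult_right_mono divide_right_mono power_mono)
      then show ?thesis using True y
        by (simp add: ennreal_mult'[symmetric] ennreal_leI)
    qed simp
  qed
  also have "\<dots> = ennreal (y ^ (n - 1) / fact (n - 1)) * (\<integral>\<^sup>+t. ennreal \<bar>nderiv n f (x + \<sigma> * t)\<bar> \<partial>lborel)"
    by (rule nn_integral_cmult) simp
  also have "(\<integral>\<^sup>+t. ennreal \<bar>nderiv n f (x + \<sigma> * t)\<bar> \<partial>lborel) = L1norm (nderiv n f)"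
    unfolding L1norm_def using nn_integral_real_affine[of "\<lambda>t. ennreal \<bar>nderiv n f t\<bar>" \<sigma> x] \<sigma> s1
    by auto
  finally show ?thesis .
qed




definition Delta2 :: "(real \<Rightarrow> real) \<Rightarrow> real \<Rightarrow> ennreal" where
  "Delta2 g t = (\<integral>\<^sup>+x. ennreal \<bar>g (x + 2 * t) - 2 * g (x + t) + g x\<bar> \<partial>lborel)"

lemma Dsym_Delta2:
  assumes [measurable]: "g \<in> borel_measurable borel"
  shows "(\<integral>\<^sup>+x. ennreal \<bar>Dsym g x t\<bar> \<partial>lborel) = Delta2 g t"
proof -
  have "(\<integral>\<^sup>+x. ennreal \<bar>Dsym g x t\<bar> \<partial>lborel) = ennreal \<bar>1\<bar> * (\<integral>\<^sup>+x. ennreal \<bar>Dsym g (t + 1 * x) t\<bar> \<partial>lborel)"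
    by (rule nn_integral_real_affine) (auto simp: Dsym_def)
  also have "\<dots> = Delta2 g t"
    unfolding Delta2_def Dsym_def by (simp add: algebra_simps)
  finally show ?thesis by simp
qed

lemma tele: "(\<Sum>i<m. \<phi> (z + real (Suc i) * h) - \<phi> (z + real i * h)) = \<phi> (z + real m * h) - (\<phi> z :: real)"
  using sum_lessThan_telescope[of "\<lambda>i. \<phi> (z + real i * h)" m] by simp

lemma Delta_mult_identity:
  fixes g :: "real \<Rightarrow> real"
  shows "g (x + 2 * (real m * h)) - 2 * g (x + real m * h) + g x
    = (\<Sum>i<m. \<Sum>j<m. g (x + real (i + j) * h + 2 * h) - 2 * g (x + real (i + j) * h + h) + g (x + real (i + j) * h))"
proof -
  define d where "d = (\<lambda>z. g (z + h) - g z)"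
  have dd: "g (z + 2 * h) - 2 * g (z + h) + g z = d (z + h) - d z" for z
    unfolding d_def by (simp add: algebra_simps)
  have gsum: "g (z + real m * h) - g z = (\<Sum>i<m. d (z + real i * h))" for z
    using tele[of "g" z h m] unfolding d_def by (simp add: algebra_simps)
  have "g (x + 2 * (real m * h)) - 2 * g (x + real m * h) + g x
      = (g ((x + real m * h) + real m * h) - g (x + real m * h)) - (g (x + real m * h) - g x)"
    by (simp add: algebra_simps)
  also have "\<dots> = (\<Sum>i<m. d (x + real i * h + real m * h) - d (x + real i * h))"
    unfolding gsum by (simp add: sum_subtractf algebra_simps)
  also have "\<dots> = (\<Sum>i<m. \<Sum>j<m. d (x + real i * h + real (Suc j) * h) - d (x + real i * h + real j * h))"
    using tele[of d] by simp
  also have "\<dots> = (\<Sum>i<m. \<Sum>j<m. g (x + real (i + j) * h + 2 * h) - 2 * g (x + real (i + j) * h + h) + g (x + real (i + j) * h))"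
    unfolding dd by (intro sum.cong refl) (simp add: d_def algebra_simps)
  finally show ?thesis .
qed

lemma Delta2_mult:
  assumes [measurable]: "g \<in> borel_measurable borel"
  shows "Delta2 g (real m * h) \<le> ennreal (real m ^ 2) * Delta2 g h"
proof -
  let ?D = "\<lambda>z. g (z + 2 * h) - 2 * g (z + h) + g z"
  have "Delta2 g (real m * h) \<le> (\<integral>\<^sup>+x. (\<Sum>i<m. \<Sum>j<m. ennreal \<bar>?D (x + real (i + j) * h)\<bar>) \<partial>lborel)"
    unfolding Delta2_def
  proof (intro nn_integral_mono)
    fix x
    have "\<bar>g (x + 2 * (real m * h)) - 2 * g (x + real m * h) + g x\<bar>
        \<le> (\<Sum>i<m. \<Sum>j<m. \<bar>?D (x + real (i + j) * h)\<bar>)"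
      unfolding Delta_mult_identity[of g x m h]
      by (rule order_trans[OF sum_abs]) (intro sum_mono sum_abs)
    then show "ennreal \<bar>g (x + 2 * (real m * h)) - 2 * g (x + real m * h) + g x\<bar>
        \<le> (\<Sum>i<m. \<Sum>j<m. ennreal \<bar>?D (x + real (i + j) * h)\<bar>)"
      by (simp add: sum_ennreal ennreal_leI)
  qed
  also have "\<dots> = (\<Sum>i<m. \<Sum>j<m. \<integral>\<^sup>+x. ennreal \<bar>?D (x + real (i + j) * h)\<bar> \<partial>lborel)"
    by (subst nn_integral_sum, simp, intro sum.cong refl, subst nn_integral_sum, simp_all)
  also have "\<dots> = (\<Sum>i<m. \<Sum>j<m. Delta2 g h)"
  proof (intro sum.cong refl)
    fix i j
    have "Delta2 g h = ennreal \<bar>1\<bar> * (\<integral>\<^sup>+x. ennreal \<bar>?D (real (i + j) * h + 1 * x)\<bar> \<partial>lborel)"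
      unfolding Delta2_def by (rule nn_integral_real_affine) auto
    then show "(\<integral>\<^sup>+x. ennreal \<bar>?D (x + real (i + j) * h)\<bar> \<partial>lborel) = Delta2 g h"
      by (simp add: add.commute)
  qed
  also have "\<dots> = ennreal (real m ^ 2) * Delta2 g h"
    by (simp add: power2_eq_square ennreal_of_nat_eq_real_of_nat[symmetric] of_nat_mult[symmetric]
        ennreal_mult'[symmetric] mult.assoc[symmetric] del: of_nat_mult)
  finally show ?thesis .
qed




lemma L1norm_integrable:
  fixes g :: "real \<Rightarrow> real"
  assumes "integrable lborel g" shows "L1norm g = ennreal (\<integral>x. \<bar>g x\<bar> \<partial>lborel)"
  unfolding L1norm_def using assms by (intro nn_integral_eq_integral) auto

lemma Delta2_integrable:
  fixes g :: "real \<Rightarrow> real"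
  assumes g: "integrable lborel g"
  shows "integrable lborel (\<lambda>x. \<bar>g (x + 2 * t) - 2 * g (x + t) + g x\<bar>)"
proof -
  have i1: "integrable lborel (\<lambda>x. g (2 * t + 1 * x))" by (rule lborel_integrable_real_affine[OF g]) simp
  have i2: "integrable lborel (\<lambda>x. g (t + 1 * x))" by (rule lborel_integrable_real_affine[OF g]) simp
  have "integrable lborel (\<lambda>x. g (2 * t + 1 * x) - 2 * g (t + 1 * x) + g x)"
    by (intro Bochner_Integration.integrable_add Bochner_Integration.integrable_diff integrable_mult_right i1 i2 g)
  then show ?thesis by (intro integrable_abs) (simp add: add.commute)
qed

lemma Delta2_eq:
  fixes g :: "real \<Rightarrow> real"
  assumes g: "integrable lborel g"
  shows "Delta2 g t = ennreal (\<integral>x. \<bar>g (x + 2 * t) - 2 * g (x + t) + g x\<bar> \<partial>lborel)"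
  unfolding Delta2_def by (intro nn_integral_eq_integral Delta2_integrable g) auto

lemma Delta2_le4:
  fixes g :: "real \<Rightarrow> real"
  assumes g: "integrable lborel g"
  shows "Delta2 g t \<le> ennreal (4 * (\<integral>x. \<bar>g x\<bar> \<partial>lborel))"
proof -
  have gm[measurable]: "g \<in> borel_measurable borel" using g by auto
  have tr: "(\<integral>\<^sup>+x. ennreal \<bar>g (x + c)\<bar> \<partial>lborel) = L1norm g" for c
    unfolding L1norm_def using nn_integral_real_affine[of "\<lambda>x. ennreal \<bar>g x\<bar>" 1 c]
    by (simp add: add.commute)
  have "Delta2 g t \<le> (\<integral>\<^sup>+x. ennreal \<bar>g (x + 2 * t)\<bar> + 2 * ennreal \<bar>g (x + t)\<bar> + ennreal \<bar>g (x + 0)\<bar> \<partial>lborel)"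
    unfolding Delta2_def
  proof (intro nn_integral_mono)
    fix x
    have "\<bar>g (x + 2 * t) - 2 * g (x + t) + g x\<bar> \<le> \<bar>g (x + 2 * t)\<bar> + 2 * \<bar>g (x + t)\<bar> + \<bar>g x\<bar>" by linarith
    then have "ennreal \<bar>g (x + 2 * t) - 2 * g (x + t) + g x\<bar> \<le> ennreal (\<bar>g (x + 2 * t)\<bar> + 2 * \<bar>g (x + t)\<bar> + \<bar>g x\<bar>)"
      by (rule ennreal_leI)
    moreover have "ennreal (\<bar>g (x + 2 * t)\<bar> + 2 * \<bar>g (x + t)\<bar> + \<bar>g x\<bar>) = ennreal \<bar>g (x + 2 * t)\<bar> + 2 * ennreal \<bar>g (x + t)\<bar> + ennreal \<bar>g (x + 0)\<bar>"
      by (simp add: ennreal_plus ennreal_mult')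
    ultimately show "ennreal \<bar>g (x + 2 * t) - 2 * g (x + t) + g x\<bar> \<le> ennreal \<bar>g (x + 2 * t)\<bar> + 2 * ennreal \<bar>g (x + t)\<bar> + ennreal \<bar>g (x + 0)\<bar>"
      by simp
  qed
  also have "\<dots> = 4 * L1norm g"
  proof -
    have "(\<integral>\<^sup>+x. ennreal \<bar>g (x + 2 * t)\<bar> + 2 * ennreal \<bar>g (x + t)\<bar> + ennreal \<bar>g (x + 0)\<bar> \<partial>lborel)
        = L1norm g + 2 * L1norm g + L1norm g"
      by (simp add: nn_integral_add nn_integral_cmult tr del: add_0_right)
    also have "\<dots> = L1norm g * (1 + 2 + 1)" by (simp only: distrib_left mult_1_right mult_1_left mult.commute)
    also have "(1 + 2 + 1 :: ennreal) = 4" by simp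
    finally show ?thesis by (simp add: mult.commute)
  qed
  also have "\<dots> = ennreal (4 * (\<integral>x. \<bar>g x\<bar> \<partial>lborel))"
    by (simp add: L1norm_integrable[OF g] ennreal_mult')
  finally show ?thesis .
qed

lemma Delta2_real_le4:
  fixes g :: "real \<Rightarrow> real"
  assumes g: "integrable lborel g"
  shows "(\<integral>x. \<bar>g (x + 2 * t) - 2 * g (x + t) + g x\<bar> \<partial>lborel) \<le> 4 * (\<integral>x. \<bar>g x\<bar> \<partial>lborel)"
  using Delta2_le4[OF g, of t] unfolding Delta2_eq[OF g]
  by (subst (asm) ennreal_le_iff) auto

lemma omega2_bdd:
  fixes g :: "real \<Rightarrow> real"
  assumes g: "integrable lborel g"
  shows "bdd_above ((\<lambda>t. \<integral>x. \<bar>g (x + 2 * t) - 2 * g (x + t) + g x\<bar> \<partial>lborel) ` S)"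
  using Delta2_real_le4[OF g] by (intro bdd_aboveI2) auto

lemma Delta2_le_omega:
  fixes g :: "real \<Rightarrow> real"
  assumes g: "integrable lborel g" and t: "\<bar>t\<bar> \<le> h"
  shows "Delta2 g t \<le> ennreal (omega2 g h)"
proof -
  have "(\<integral>x. \<bar>g (x + 2 * t) - 2 * g (x + t) + g x\<bar> \<partial>lborel) \<le> omega2 g h"
    unfolding omega2_def by (rule cSUP_upper[OF _ omega2_bdd[OF g]]) (use t in auto)
  then show ?thesis unfolding Delta2_eq[OF g] by (rule ennreal_leI)
qed

lemma omega2_nonneg:
  fixes g :: "real \<Rightarrow> real"
  assumes g: "integrable lborel g" and h: "h \<ge> 0"
  shows "omega2 g h \<ge> 0"
proof -
  have "(\<integral>x. \<bar>g (x + 2 * 0) - 2 * g (x + 0) + g x\<bar> \<partial>lborel) \<le> omega2 g h"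
    unfolding omega2_def by (rule cSUP_upper[OF _ omega2_bdd[OF g]]) (use h in auto)
  then show ?thesis by simp
qed

lemma omega2_le:
  fixes g :: "real \<Rightarrow> real"
  assumes g: "integrable lborel g" and h: "h \<ge> 0"
  shows "omega2 g h \<le> 4 * (\<integral>x. \<bar>g x\<bar> \<partial>lborel)"
  unfolding omega2_def by (rule cSUP_least) (use h Delta2_real_le4[OF g] in auto)

lemma Delta2_dilate:
  fixes g :: "real \<Rightarrow> real"
  assumes g: "integrable lborel g" and \<xi>: "\<xi> > 0" and t: "t \<ge> 0"
  shows "Delta2 g t \<le> ennreal ((1 + t / \<xi>) ^ 2 * omega2 g \<xi>)"
proof (cases "t = 0")
  case True
  then show ?thesis by (simp add: Delta2_def)
next
  case False
  then have tp: "t > 0" using t by simp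
  have gm[measurable]: "g \<in> borel_measurable borel" using g by auto
  define m where "m = nat \<lceil>t / \<xi>\<rceil>"
  have m1: "real m \<ge> t / \<xi>" unfolding m_def by linarith
  have tq: "t / \<xi> > 0" using tp \<xi> by simp
  have c0: "0 \<le> \<lceil>t / \<xi>\<rceil>" using tq by linarith
  have mr: "real m = of_int \<lceil>t / \<xi>\<rceil>" unfolding m_def using c0 by simp
  have m2: "real m \<le> 1 + t / \<xi>" unfolding mr using of_int_ceiling_le_add_one[of "t / \<xi>"] by linarith
  have mpos: "real m > 0" using m1 tp \<xi> by (smt (verit) divide_pos_pos)
  define h where "h = t / real m"
  have th: "t = real m * h" using mpos by (simp add: h_def)
  have h0: "h \<ge> 0" using mpos t by (simp add: h_def)
  have hx: "h \<le> \<xi>" using m1 \<xi> mpos unfolding h_def by (simp add: field_simps)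
  have "Delta2 g t \<le> ennreal (real m ^ 2) * Delta2 g h"
    unfolding th by (rule Delta2_mult) simp
  also have "\<dots> \<le> ennreal (real m ^ 2) * ennreal (omega2 g \<xi>)"
    by (intro mult_left_mono Delta2_le_omega g) (use h0 hx in auto)
  also have "\<dots> \<le> ennreal ((1 + t / \<xi>) ^ 2 * omega2 g \<xi>)"
    using omega2_nonneg[OF g, of \<xi>] \<xi> mpos m2
    by (simp add: ennreal_mult'[symmetric] ennreal_leI mult_right_mono power_mono)
  finally show ?thesis .
qed




lemma alg_W: fixes a al p q c d e f :: real assumes "a \<noteq> 0" "al \<noteq> 0"
  shows "a * al * p / (c * d) * (q * e * f / (2 * al * a)) = (p * q) * (e * f / (c * d)) / 2"
  using assms by (simp add: field_simps)


definition rr :: "nat \<Rightarrow> real \<Rightarrow> nat \<Rightarrow> real" where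
  "rr \<alpha> \<beta> j = Gamma ((real j + 1) / (2 * real \<alpha>)) * Gamma (\<beta> - (real j + 1) / (2 * real \<alpha>))
     / (Gamma (1 / (2 * real \<alpha>)) * Gamma (\<beta> - 1 / (2 * real \<alpha>)))"

lemma rr_0: assumes "\<alpha> \<ge> 1" "\<beta> > 1 / (2 * real \<alpha>)" shows "rr \<alpha> \<beta> 0 = 1"
proof -
  have "Gamma (1 / (2 * real \<alpha>)) > 0" "Gamma (\<beta> - 1 / (2 * real \<alpha>)) > 0"
    using assms by (auto intro!: Gamma_real_pos)
  then show ?thesis unfolding rr_def by simp
qed

lemma rr_nonneg: assumes "\<alpha> \<ge> 1" "real j + 1 < 2 * real \<alpha> * \<beta>" shows "rr \<alpha> \<beta> j \<ge> 0"
proof -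
  have a: "1 / (2 * real \<alpha>) \<le> (real j + 1) / (2 * real \<alpha>)" using assms by (simp add: divide_right_mono)
  have b: "(real j + 1) / (2 * real \<alpha>) < \<beta>" using assms by (simp add: field_simps)
  have "Gamma (1 / (2 * real \<alpha>)) > 0" "Gamma (\<beta> - 1 / (2 * real \<alpha>)) > 0"
       "Gamma ((real j + 1) / (2 * real \<alpha>)) > 0" "Gamma (\<beta> - (real j + 1) / (2 * real \<alpha>)) > 0"
    using assms a b by (auto intro!: Gamma_real_pos)
  then show ?thesis unfolding rr_def by simp
qed

lemma Wconst_pos: assumes "\<alpha> \<ge> 1" "\<beta> > 1 / (2 * real \<alpha>)" "\<xi> > 0" shows "Wconst \<alpha> \<beta> \<xi> > 0"
proof -
  have "Gamma (1 / (2 * real \<alpha>)) > 0" "Gamma (\<beta> - 1 / (2 * real \<alpha>)) > 0" "Gamma \<beta> > 0"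
    using assms by (auto intro!: Gamma_real_pos simp: order_less_trans[of 0 "1 / (2 * real \<alpha>)" \<beta>])
  then show ?thesis unfolding Wconst_def using assms by simp
qed

lemma mom_W:
  fixes j :: nat
  assumes \<alpha>: "\<alpha> \<ge> 1" and \<xi>: "\<xi> > 0" and jb: "real j + 1 < 2 * real \<alpha> * \<beta>"
  shows "ennreal (Wconst \<alpha> \<beta> \<xi>) * (\<integral>\<^sup>+y. ennreal (y ^ j * kern \<alpha> \<beta> \<xi> y) * indicator {0..} y \<partial>lborel)
       = ennreal (rr \<alpha> \<beta> j * \<xi> ^ j / 2)"
proof -
  have b1: "\<beta> > 1 / (2 * real \<alpha>)" using \<alpha> jb by (simp add: field_simps)
  have A0: "(real j + 1) / (2 * real \<alpha>) > 0" using \<alpha> by simp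
  have Ab: "(real j + 1) / (2 * real \<alpha>) < \<beta>" using \<alpha> jb by (simp add: field_simps)
  have "1 / (2 * real \<alpha>) > 0" using \<alpha> by simp
  then have gb: "Gamma \<beta> > 0" using b1 by (intro Gamma_real_pos) linarith
  have g1: "Gamma ((real j + 1) / (2 * real \<alpha>)) > 0" "Gamma (\<beta> - (real j + 1) / (2 * real \<alpha>)) > 0"
    using A0 Ab by (auto intro!: Gamma_real_pos)
  have g2: "Gamma (1 / (2 * real \<alpha>)) > 0" "Gamma (\<beta> - 1 / (2 * real \<alpha>)) > 0"
    using \<alpha> b1 by (auto intro!: Gamma_real_pos)
  have W0: "Wconst \<alpha> \<beta> \<xi> \<ge> 0" using Wconst_pos[OF \<alpha> b1 \<xi>] by simp
  have "Wconst \<alpha> \<beta> \<xi> * (\<xi> powr (real j + 1 - 2 * real \<alpha> * \<beta>)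
        * Gamma ((real j + 1) / (2 * real \<alpha>)) * Gamma (\<beta> - (real j + 1) / (2 * real \<alpha>))
        / (2 * real \<alpha> * Gamma \<beta>))
      = (\<xi> powr (2 * real \<alpha> * \<beta> - 1) * \<xi> powr (real j + 1 - 2 * real \<alpha> * \<beta>)) *
        (Gamma ((real j + 1) / (2 * real \<alpha>)) * Gamma (\<beta> - (real j + 1) / (2 * real \<alpha>))
         / (Gamma (1 / (2 * real \<alpha>)) * Gamma (\<beta> - 1 / (2 * real \<alpha>)))) / 2"
    unfolding Wconst_def using gb \<alpha> by (subst alg_W) auto
  also have "\<xi> powr (2 * real \<alpha> * \<beta> - 1) * \<xi> powr (real j + 1 - 2 * real \<alpha> * \<beta>) = \<xi> ^ j"
    using \<xi> by (simp add: powr_add[symmetric] powr_realpow)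
  finally have eq: "Wconst \<alpha> \<beta> \<xi> * (\<xi> powr (real j + 1 - 2 * real \<alpha> * \<beta>)
        * Gamma ((real j + 1) / (2 * real \<alpha>)) * Gamma (\<beta> - (real j + 1) / (2 * real \<alpha>))
        / (2 * real \<alpha> * Gamma \<beta>)) = rr \<alpha> \<beta> j * \<xi> ^ j / 2"
    unfolding rr_def by simp
  show ?thesis
    unfolding moment[OF \<alpha> \<xi> jb] using W0 \<xi> gb g1 \<alpha>
    by (simp add: ennreal_mult'[symmetric] eq[symmetric])
qed

lemma mom_integrable:
  fixes j :: nat
  assumes \<alpha>: "\<alpha> \<ge> 1" and \<xi>: "\<xi> > 0" and jb: "real j + 1 < 2 * real \<alpha> * \<beta>"
  shows "integrable lborel (\<lambda>y. indicator {0..} y * (y ^ j * kern \<alpha> \<beta> \<xi> y))"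
proof (rule integrableI_nonneg)
  show "(\<lambda>y. indicator {0..} y * (y ^ j * kern \<alpha> \<beta> \<xi> y)) \<in> borel_measurable lborel" by measurable
  show "AE x in lborel. 0 \<le> indicator {0..} x * (x ^ j * kern \<alpha> \<beta> \<xi> x)"
    using kern_pos[OF \<xi>] by (auto simp: indicator_def less_imp_le)
  have "(\<integral>\<^sup>+y. ennreal (indicator {0..} y * (y ^ j * kern \<alpha> \<beta> \<xi> y)) \<partial>lborel)
     = (\<integral>\<^sup>+y. ennreal (y ^ j * kern \<alpha> \<beta> \<xi> y) * indicator {0..} y \<partial>lborel)"
    by (intro nn_integral_cong) (auto simp: indicator_def)
  also have "\<dots> < \<infinity>" unfolding moment[OF \<alpha> \<xi> jb] by simp
  finally show "(\<integral>\<^sup>+y. ennreal (indicator {0..} y * (y ^ j * kern \<alpha> \<beta> \<xi> y)) \<partial>lborel) < \<infinity>" .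
qed

lemma mom_W_real:
  fixes j :: nat
  assumes \<alpha>: "\<alpha> \<ge> 1" and \<xi>: "\<xi> > 0" and jb: "real j + 1 < 2 * real \<alpha> * \<beta>"
  shows "Wconst \<alpha> \<beta> \<xi> * (\<integral>y. indicator {0..} y * (y ^ j * kern \<alpha> \<beta> \<xi> y) \<partial>lborel) = rr \<alpha> \<beta> j * \<xi> ^ j / 2"
proof -
  have b1: "\<beta> > 1 / (2 * real \<alpha>)" using \<alpha> jb by (simp add: field_simps)
  have W0: "Wconst \<alpha> \<beta> \<xi> \<ge> 0" using Wconst_pos[OF \<alpha> b1 \<xi>] by simp
  have "(\<integral>\<^sup>+y. ennreal (indicator {0..} y * (y ^ j * kern \<alpha> \<beta> \<xi> y)) \<partial>lborel)
     = ennreal (\<integral>y. indicator {0..} y * (y ^ j * kern \<alpha> \<beta> \<xi> y) \<partial>lborel)"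
    by (rule nn_integral_eq_integral[OF mom_integrable[OF assms]])
       (use kern_pos[OF \<xi>] in \<open>auto simp: indicator_def less_imp_le\<close>)
  moreover have "(\<integral>\<^sup>+y. ennreal (indicator {0..} y * (y ^ j * kern \<alpha> \<beta> \<xi> y)) \<partial>lborel)
     = (\<integral>\<^sup>+y. ennreal (y ^ j * kern \<alpha> \<beta> \<xi> y) * indicator {0..} y \<partial>lborel)"
    by (intro nn_integral_cong) (auto simp: indicator_def)
  ultimately have "ennreal (Wconst \<alpha> \<beta> \<xi> * (\<integral>y. indicator {0..} y * (y ^ j * kern \<alpha> \<beta> \<xi> y) \<partial>lborel))
      = ennreal (rr \<alpha> \<beta> j * \<xi> ^ j / 2)"
    using mom_W[OF assms] W0 by (simp add: ennreal_mult')
  moreover have "(\<integral>y. indicator {0..} y * (y ^ j * kern \<alpha> \<beta> \<xi> y) \<partial>lborel) \<ge> 0"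
    using kern_pos[OF \<xi>] by (intro integral_nonneg_AE) (auto simp: indicator_def less_imp_le)
  ultimately show ?thesis
    using rr_nonneg[OF \<alpha> jb] \<xi> W0 by (subst (asm) ennreal_inj) auto
qed




lemma even_sum:
  fixes c :: "nat \<Rightarrow> real"
  shows "c 0 + (\<Sum>\<rho>=1..N. c (2 * \<rho>)) = (\<Sum>i<2 * N. (1 + (-1) ^ i) / 2 * c i) + c (2 * N)"
proof (induction N)
  case 0 then show ?case by simp
next
  case (Suc N)
  have "(\<Sum>i<2 * Suc N. (1 + (-1) ^ i) / 2 * c i) = (\<Sum>i<2 * N. (1 + (-1) ^ i) / 2 * c i) + c (2 * N)"
    by (simp add: power_add)
  then show ?case using Suc by (simp add: algebra_simps)
qed

lemma abs_mom_integrable: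
  fixes j :: nat
  assumes \<alpha>: "\<alpha> \<ge> 1" and \<xi>: "\<xi> > 0" and jb: "real j + 1 < 2 * real \<alpha> * \<beta>"
  shows "integrable lborel (\<lambda>y. \<bar>y\<bar> ^ j * kern \<alpha> \<beta> \<xi> y)"
proof -
  let ?h = "\<lambda>y. indicator {0..} y * (y ^ j * kern \<alpha> \<beta> \<xi> y)"
  have h: "integrable lborel ?h" by (rule mom_integrable[OF assms])
  have hm: "integrable lborel (\<lambda>y. ?h (0 + (-1) * y))" by (rule lborel_integrable_real_affine[OF h]) simp
  have "integrable lborel (\<lambda>y. ?h y + ?h (0 + (-1) * y))" by (rule Bochner_Integration.integrable_add[OF h hm])
  then show ?thesis
  proof (rule Bochner_Integration.integrable_bound)
    show "(\<lambda>y. \<bar>y\<bar> ^ j * kern \<alpha> \<beta> \<xi> y) \<in> borel_measurable lborel" by measurable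
    show "AE y in lborel. norm (\<bar>y\<bar> ^ j * kern \<alpha> \<beta> \<xi> y) \<le> norm (?h y + ?h (0 + (-1) * y))"
    proof (intro AE_I2)
      fix y :: real
      have kp: "kern \<alpha> \<beta> \<xi> y > 0" "kern \<alpha> \<beta> \<xi> (- y) = kern \<alpha> \<beta> \<xi> y" using kern_pos[OF \<xi>] kern_even by auto
      show "norm (\<bar>y\<bar> ^ j * kern \<alpha> \<beta> \<xi> y) \<le> norm (?h y + ?h (0 + (-1) * y))"
      proof (cases "y \<ge> 0")
        case True
        then show ?thesis using kp by (auto simp: indicator_def abs_mult)
      next
        case False
        then show ?thesis using kp by (auto simp: indicator_def abs_mult)
      qed
    qed
  qed
qed




locale setting =
  fixes n \<alpha> :: nat and \<beta> :: real and f :: "real \<Rightarrow> real"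
  assumes ev: "even n" and n2: "n \<ge> 2" and \<alpha>1: "\<alpha> \<ge> 1"
    and \<beta>b: "\<beta> > (real n + 3) / (2 * real \<alpha>)"
    and Cn: "Cn n f" and gi: "integrable lborel (nderiv n f)"
begin

lemma jb: "real j \<le> real n + 2 \<Longrightarrow> real j + 1 < 2 * real \<alpha> * \<beta>"
  using \<beta>b \<alpha>1 by (simp add: field_simps)

lemma b1: "\<beta> > 1 / (2 * real \<alpha>)"
  using jb[of 0] \<alpha>1 by (simp add: field_simps)

lemma f_cont: "continuous_on UNIV f"
  using Cn_cont[OF Cn, of 0] by simp

lemma f_meas[measurable]: "f \<in> borel_measurable borel"
  by (rule borel_measurable_continuous_onI[OF f_cont])

lemma g_meas[measurable]: "nderiv n f \<in> borel_measurable borel"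
  by (rule borel_measurable_continuous_onI[OF Cn_cont[OF Cn le_refl]])

lemma f_bound:
  fixes x y :: real
  shows "\<bar>f (x + y)\<bar> \<le> (\<Sum>i<n. \<bar>nderiv i f x\<bar> / fact i * \<bar>y\<bar> ^ i)
           + (\<integral>t. \<bar>nderiv n f t\<bar> \<partial>lborel) / fact (n - 1) * \<bar>y\<bar> ^ (n - 1)"
proof -
  define \<sigma> :: real where "\<sigma> = (if y \<ge> 0 then 1 else -1)"
  have \<sigma>: "\<sigma> = 1 \<or> \<sigma> = -1" unfolding \<sigma>_def by auto
  have xy: "x + \<sigma> * \<bar>y\<bar> = x + y" unfolding \<sigma>_def by auto
  have s1: "\<bar>\<sigma>\<bar> = 1" using \<sigma> by auto
  have n0: "n > 0" using n2 by simp
  let ?S = "\<Sum>i<n. \<bar>y\<bar> ^ i / fact i * (\<sigma> ^ i * nderiv i f x)"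
  have "ennreal \<bar>f (x + y) - ?S\<bar> \<le> ennreal (\<bar>y\<bar> ^ (n - 1) / fact (n - 1)) * L1norm (nderiv n f)"
    using one_sided_bound[OF Cn n0 abs_ge_zero \<sigma>, of x "y"] unfolding xy .
  also have "\<dots> = ennreal (\<bar>y\<bar> ^ (n - 1) / fact (n - 1) * (\<integral>t. \<bar>nderiv n f t\<bar> \<partial>lborel))"
    unfolding L1norm_integrable[OF gi] by (simp add: ennreal_mult'[symmetric] integral_nonneg_AE)
  finally have 1: "\<bar>f (x + y) - ?S\<bar> \<le> (\<integral>t. \<bar>nderiv n f t\<bar> \<partial>lborel) / fact (n - 1) * \<bar>y\<bar> ^ (n - 1)"
    by (subst (asm) ennreal_le_iff) (auto intro!: integral_nonneg_AE simp: mult_ac)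
  have 2: "\<bar>?S\<bar> \<le> (\<Sum>i<n. \<bar>nderiv i f x\<bar> / fact i * \<bar>y\<bar> ^ i)"
    by (rule order_trans[OF sum_abs]) (simp add: abs_mult power_abs s1 mult_ac)
  have 3: "\<bar>f (x + y)\<bar> \<le> \<bar>f (x + y) - ?S\<bar> + \<bar>?S\<bar>"
    using abs_triangle_ineq[of "f (x + y) - ?S" ?S] by simp
  show ?thesis using 1 2 3 by linarith
qed

lemma f_kern_integrable:
  assumes \<xi>: "\<xi> > 0"
  shows "integrable lborel (\<lambda>y. f (x + y) * kern \<alpha> \<beta> \<xi> y)"
proof -
  let ?B = "\<lambda>y. (\<Sum>i<n. \<bar>nderiv i f x\<bar> / fact i * (\<bar>y\<bar> ^ i * kern \<alpha> \<beta> \<xi> y))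
           + (\<integral>t. \<bar>nderiv n f t\<bar> \<partial>lborel) / fact (n - 1) * (\<bar>y\<bar> ^ (n - 1) * kern \<alpha> \<beta> \<xi> y)"
  have i1: "integrable lborel (\<lambda>y. \<bar>y\<bar> ^ i * kern \<alpha> \<beta> \<xi> y)" if "i \<le> n + 2" for i
    by (rule abs_mom_integrable[OF \<alpha>1 \<xi> jb]) (use that in simp)
  have "integrable lborel (\<lambda>y. \<Sum>i<n. \<bar>nderiv i f x\<bar> / fact i * (\<bar>y\<bar> ^ i * kern \<alpha> \<beta> \<xi> y))"
    by (rule Bochner_Integration.integrable_sum, rule integrable_mult_right, rule i1) simp
  moreover have "integrable lborel (\<lambda>y. (\<integral>t. \<bar>nderiv n f t\<bar> \<partial>lborel) / fact (n - 1) * (\<bar>y\<bar> ^ (n - 1) * kern \<alpha> \<beta> \<xi> y))"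
    by (rule integrable_mult_right, rule i1) simp
  ultimately have "integrable lborel ?B" by (rule Bochner_Integration.integrable_add)
  then show ?thesis
  proof (rule Bochner_Integration.integrable_bound)
    show "(\<lambda>y. f (x + y) * kern \<alpha> \<beta> \<xi> y) \<in> borel_measurable lborel" by measurable
    show "AE y in lborel. norm (f (x + y) * kern \<alpha> \<beta> \<xi> y) \<le> norm (?B y)"
    proof (intro AE_I2)
      fix y
      have kp: "kern \<alpha> \<beta> \<xi> y > 0" using kern_pos[OF \<xi>] by auto
      have "\<bar>f (x + y)\<bar> * kern \<alpha> \<beta> \<xi> y \<le> ((\<Sum>i<n. \<bar>nderiv i f x\<bar> / fact i * \<bar>y\<bar> ^ i)
           + (\<integral>t. \<bar>nderiv n f t\<bar> \<partial>lborel) / fact (n - 1) * \<bar>y\<bar> ^ (n - 1)) * kern \<alpha> \<beta> \<xi> y"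
        using f_bound[of x y] kp by (intro mult_right_mono) auto
      also have "\<dots> = ?B y" by (simp add: distrib_left distrib_right sum_distrib_left sum_distrib_right mult_ac)
      finally have "\<bar>f (x + y) * kern \<alpha> \<beta> \<xi> y\<bar> \<le> ?B y" using kp by (simp add: abs_mult)
      then show "norm (f (x + y) * kern \<alpha> \<beta> \<xi> y) \<le> norm (?B y)" by simp
    qed
  qed
qed

end




context setting begin

lemma split_int:
  assumes \<xi>: "\<xi> > 0"
  shows "(\<integral>y. f (x + y) * kern \<alpha> \<beta> \<xi> y \<partial>lborel)
       = (\<integral>y. indicator {0..} y * ((f (x + y) + f (x - y)) * kern \<alpha> \<beta> \<xi> y) \<partial>lborel)"
    and "integrable lborel (\<lambda>y. indicator {0..} y * ((f (x + y) + f (x - y)) * kern \<alpha> \<beta> \<xi> y))"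
proof -
  define \<phi> where "\<phi> = (\<lambda>y. f (x + y) * kern \<alpha> \<beta> \<xi> y)"
  define \<psi> where "\<psi> = (\<lambda>y. f (x - y) * kern \<alpha> \<beta> \<xi> y)"
  have \<phi>m[measurable]: "\<phi> \<in> borel_measurable borel" unfolding \<phi>_def by measurable
  have \<phi>i: "integrable lborel \<phi>" unfolding \<phi>_def by (rule f_kern_integrable[OF \<xi>])
  have \<psi>\<phi>: "\<psi> = (\<lambda>y. \<phi> (0 + (-1) * y))" unfolding \<phi>_def \<psi>_def by (simp add: kern_even)
  have \<psi>i: "integrable lborel \<psi>" unfolding \<psi>\<phi> by (rule lborel_integrable_real_affine[OF \<phi>i]) simp
  have i1: "integrable lborel (\<lambda>y. indicator {0..} y * \<phi> y)" using integrable_mult_indicator[OF _ \<phi>i, of "_"] by simp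
  have i2: "integrable lborel (\<lambda>y. indicator {..<0} y * \<phi> y)" using integrable_mult_indicator[OF _ \<phi>i, of "_"] by simp
  have i3: "integrable lborel (\<lambda>y. indicator {0..} y * \<psi> y)" using integrable_mult_indicator[OF _ \<psi>i, of "_"] by simp
  have "(\<integral>y. \<phi> y \<partial>lborel) = (\<integral>y. indicator {0..} y * \<phi> y + indicator {..<0} y * \<phi> y \<partial>lborel)"
    by (rule arg_cong[where f="integral\<^sup>L lborel"]) (auto simp: fun_eq_iff indicator_def)
  also have "\<dots> = (\<integral>y. indicator {0..} y * \<phi> y \<partial>lborel) + (\<integral>y. indicator {..<0} y * \<phi> y \<partial>lborel)"
    by (rule Bochner_Integration.integral_add[OF i1 i2])
  also have "(\<integral>y. indicator {..<0} y * \<phi> y \<partial>lborel)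
      = \<bar>-1\<bar> *\<^sub>R (\<integral>y. indicator {..<0} (0 + (-1) * y) * \<phi> (0 + (-1) * y) \<partial>lborel)"
    by (rule lborel_integral_real_affine) simp
  also have "\<dots> = (\<integral>y. indicator {0..} y * \<psi> y \<partial>lborel)"
    unfolding \<psi>\<phi>
    apply simp
    apply (rule integral_cong_AE)
      apply measurable
    apply (auto intro!: eventually_mono[OF AE_lborel_singleton[of 0]] simp: indicator_def)
    done
  also have "(\<integral>y. indicator {0..} y * \<phi> y \<partial>lborel) + (\<integral>y. indicator {0..} y * \<psi> y \<partial>lborel)
      = (\<integral>y. indicator {0..} y * \<phi> y + indicator {0..} y * \<psi> y \<partial>lborel)"
    by (rule Bochner_Integration.integral_add[OF i1 i3, symmetric])
  finally show "(\<integral>y. f (x + y) * kern \<alpha> \<beta> \<xi> y \<partial>lborel)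
       = (\<integral>y. indicator {0..} y * ((f (x + y) + f (x - y)) * kern \<alpha> \<beta> \<xi> y) \<partial>lborel)"
    unfolding \<phi>_def \<psi>_def by (simp add: algebra_simps)
  have "integrable lborel (\<lambda>y. indicator {0..} y * \<phi> y + indicator {0..} y * \<psi> y)"
    by (rule Bochner_Integration.integrable_add[OF i1 i3])
  then show "integrable lborel (\<lambda>y. indicator {0..} y * ((f (x + y) + f (x - y)) * kern \<alpha> \<beta> \<xi> y))"
    unfolding \<phi>_def \<psi>_def by (simp add: algebra_simps)
qed

lemma K_formula:
  assumes \<xi>: "\<xi> > 0"
  shows "Kfun n \<alpha> \<beta> \<xi> f x = Wconst \<alpha> \<beta> \<xi> * (\<integral>y. indicator {0..} y * (kern \<alpha> \<beta> \<xi> y * Rm n f x y) \<partial>lborel)"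
    and "integrable lborel (\<lambda>y. indicator {0..} y * (kern \<alpha> \<beta> \<xi> y * Rm n f x y))"
proof -
  define A where "A = (\<lambda>y. indicator {0..} y * ((f (x + y) + f (x - y)) * kern \<alpha> \<beta> \<xi> y))"
  define B where "B = (\<lambda>j y. indicator {0..} y * (y ^ j * kern \<alpha> \<beta> \<xi> y))"
  define a where "a = 2 * nderiv n f x / fact n"
  define b where "b = (\<lambda>i. (1 + (-1) ^ i) * nderiv i f x / fact i)"
  define W where "W = Wconst \<alpha> \<beta> \<xi>"
  have Ai: "integrable lborel A" unfolding A_def by (rule split_int(2)[OF \<xi>])
  have Bi: "integrable lborel (B j)" if "j \<le> n" for j
    unfolding B_def by (rule mom_integrable[OF \<alpha>1 \<xi> jb]) (use that in simp)
  have WB: "W * (\<integral>y. B j y \<partial>lborel) = rr \<alpha> \<beta> j * \<xi> ^ j / 2" if "j \<le> n" for j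
    unfolding B_def W_def by (rule mom_W_real[OF \<alpha>1 \<xi> jb]) (use that in simp)
  have WA: "W * (\<integral>y. A y \<partial>lborel) = Mxi \<alpha> \<beta> \<xi> f x"
    unfolding A_def W_def Mxi_kern split_int(1)[OF \<xi>] ..
  have pw: "(\<lambda>y. indicator {0..} y * (kern \<alpha> \<beta> \<xi> y * Rm n f x y))
      = (\<lambda>y. A y - a * B n y - (\<Sum>i<n. b i * B i y))"
    by (auto simp: fun_eq_iff Rm_def indicator_def A_def B_def a_def b_def right_diff_distrib
        sum_distrib_left mult_ac intro!: sum.cong)
  have int_sum: "integrable lborel (\<lambda>y. \<Sum>i<n. b i * B i y)"
    by (rule Bochner_Integration.integrable_sum, rule integrable_mult_right, rule Bi) simp
  have int_all: "integrable lborel (\<lambda>y. A y - a * B n y - (\<Sum>i<n. b i * B i y))"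
    by (intro Bochner_Integration.integrable_diff integrable_mult_right Ai Bi int_sum) simp
  then show "integrable lborel (\<lambda>y. indicator {0..} y * (kern \<alpha> \<beta> \<xi> y * Rm n f x y))"
    unfolding pw .
  have "W * (\<integral>y. indicator {0..} y * (kern \<alpha> \<beta> \<xi> y * Rm n f x y) \<partial>lborel)
      = W * ((\<integral>y. A y \<partial>lborel) - a * (\<integral>y. B n y \<partial>lborel) - (\<Sum>i<n. b i * (\<integral>y. B i y \<partial>lborel)))"
    unfolding pw
    apply (subst Bochner_Integration.integral_diff)
      apply (intro Bochner_Integration.integrable_diff integrable_mult_right Ai Bi int_sum; simp)
     apply (rule int_sum)
    apply (subst Bochner_Integration.integral_diff[OF Ai])
     apply (intro integrable_mult_right Bi; simp)
    apply (subst Bochner_Integration.integral_sum)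
     apply (intro integrable_mult_right Bi; simp)
    apply simp
    done
  also have "\<dots> = Mxi \<alpha> \<beta> \<xi> f x - a * (W * (\<integral>y. B n y \<partial>lborel)) - (\<Sum>i<n. b i * (W * (\<integral>y. B i y \<partial>lborel)))"
    by (simp add: right_diff_distrib WA sum_distrib_left mult_ac)
  also have "\<dots> = Mxi \<alpha> \<beta> \<xi> f x - a * (rr \<alpha> \<beta> n * \<xi> ^ n / 2) - (\<Sum>i<n. b i * (rr \<alpha> \<beta> i * \<xi> ^ i / 2))"
    by (simp add: WB)
  also have "\<dots> = Kfun n \<alpha> \<beta> \<xi> f x"
  proof -
    define c where "c = (\<lambda>j. nderiv j f x * rr \<alpha> \<beta> j * \<xi> ^ j / fact j)"
    obtain N where nN: "n = 2 * N" using ev by (auto elim!: evenE)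
    have c0: "c 0 = f x" unfolding c_def using rr_0[OF \<alpha>1 b1] by simp
    have es: "c 0 + (\<Sum>\<rho>=1..N. c (2 * \<rho>)) = (\<Sum>i<n. (1 + (-1) ^ i) / 2 * c i) + c n"
      unfolding nN by (rule even_sum)
    have kt: "(\<Sum>\<rho>=1..n div 2. nderiv (2 * \<rho>) f x / fact (2 * \<rho>)
          * (Gamma ((2 * real \<rho> + 1) / (2 * real \<alpha>)) * Gamma (\<beta> - (2 * real \<rho> + 1) / (2 * real \<alpha>))
             / (Gamma (1 / (2 * real \<alpha>)) * Gamma (\<beta> - 1 / (2 * real \<alpha>))))
          * \<xi> ^ (2 * \<rho>)) = (\<Sum>\<rho>=1..N. c (2 * \<rho>))"
      unfolding nN c_def rr_def by (intro sum.cong) auto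
    have t1: "a * (rr \<alpha> \<beta> n * \<xi> ^ n / 2) = c n" unfolding a_def c_def by simp
    have t2: "(\<Sum>i<n. b i * (rr \<alpha> \<beta> i * \<xi> ^ i / 2)) = (\<Sum>i<n. (1 + (-1) ^ i) / 2 * c i)"
      unfolding b_def c_def by (intro sum.cong) auto
    show ?thesis unfolding Kfun_def kt t1 t2 using es c0 by linarith
  qed
  finally show "Kfun n \<alpha> \<beta> \<xi> f x = Wconst \<alpha> \<beta> \<xi> * (\<integral>y. indicator {0..} y * (kern \<alpha> \<beta> \<xi> y * Rm n f x y) \<partial>lborel)"
    unfolding W_def by simp
qed

end




definition Hf :: "nat \<Rightarrow> nat \<Rightarrow> real \<Rightarrow> real \<Rightarrow> (real \<Rightarrow> real) \<Rightarrow> real \<Rightarrow> real \<Rightarrow> real \<Rightarrow> ennreal" where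
  "Hf n \<alpha> \<beta> \<xi> f x y t = ennreal (Wconst \<alpha> \<beta> \<xi> * kern \<alpha> \<beta> \<xi> y * y ^ (n - 1) / fact (n - 1)
      * (if 0 \<le> t \<and> t \<le> y then \<bar>Dsym (nderiv n f) x t\<bar> else 0))"

context setting begin

lemma G_meas: "(\<lambda>(x, y). \<integral>\<^sup>+t. Hf n \<alpha> \<beta> \<xi> f x y t \<partial>lborel) \<in> borel_measurable (lborel \<Otimes>\<^sub>M lborel)"
  unfolding Hf_def Dsym_def by measurable

lemma Hf_meas2: "(\<lambda>(x, t). Hf n \<alpha> \<beta> \<xi> f x y t) \<in> borel_measurable (lborel \<Otimes>\<^sub>M lborel)"
  unfolding Hf_def Dsym_def by measurable

lemma K_pointwise:
  assumes \<xi>: "\<xi> > 0"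
  shows "ennreal \<bar>Kfun n \<alpha> \<beta> \<xi> f x\<bar> \<le> (\<integral>\<^sup>+y. \<integral>\<^sup>+t. Hf n \<alpha> \<beta> \<xi> f x y t \<partial>lborel \<partial>lborel)"
proof -
  define I where "I = (\<lambda>y. indicator {0..} y * (kern \<alpha> \<beta> \<xi> y * Rm n f x y))"
  define W where "W = Wconst \<alpha> \<beta> \<xi>"
  have W0: "W \<ge> 0" unfolding W_def using Wconst_pos[OF \<alpha>1 b1 \<xi>] by simp
  have Ii: "integrable lborel I" unfolding I_def by (rule K_formula(2)[OF \<xi>])
  have n0: "n > 0" using n2 by simp
  have gm: "nderiv n f \<in> borel_measurable borel" by (rule g_meas)
  have "ennreal \<bar>Kfun n \<alpha> \<beta> \<xi> f x\<bar> = ennreal W * ennreal (norm (\<integral>y. I y \<partial>lborel))"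
    unfolding K_formula(1)[OF \<xi>] I_def W_def using W0 by (simp add: abs_mult ennreal_mult' W_def)
  also have "\<dots> \<le> ennreal W * (\<integral>\<^sup>+y. norm (I y) \<partial>lborel)"
    by (intro mult_left_mono integral_norm_bound_ennreal Ii) simp
  also have "\<dots> = (\<integral>\<^sup>+y. ennreal W * ennreal (norm (I y)) \<partial>lborel)"
    by (rule nn_integral_cmult[symmetric]) (unfold I_def Rm_def, measurable)
  also have "\<dots> \<le> (\<integral>\<^sup>+y. \<integral>\<^sup>+t. Hf n \<alpha> \<beta> \<xi> f x y t \<partial>lborel \<partial>lborel)"
  proof (intro nn_integral_mono)
    fix y :: real
    show "ennreal W * ennreal (norm (I y)) \<le> (\<integral>\<^sup>+t. Hf n \<alpha> \<beta> \<xi> f x y t \<partial>lborel)"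
    proof (cases "y \<ge> 0")
      case False
      then show ?thesis by (simp add: I_def)
    next
      case True
      have kp: "kern \<alpha> \<beta> \<xi> y > 0" by (rule kern_pos[OF \<xi>])
      have c0: "W * kern \<alpha> \<beta> \<xi> y * y ^ (n - 1) / fact (n - 1) \<ge> 0" using W0 kp True by simp
      have "ennreal W * ennreal (norm (I y)) = ennreal (W * kern \<alpha> \<beta> \<xi> y) * ennreal \<bar>Rm n f x y\<bar>"
        using True kp W0 by (simp add: I_def abs_mult ennreal_mult' mult.assoc)
      also have "\<dots> \<le> ennreal (W * kern \<alpha> \<beta> \<xi> y) * (ennreal (y ^ (n - 1) / fact (n - 1)) *
          (\<integral>\<^sup>+t. ennreal \<bar>Dsym (nderiv n f) x t\<bar> * indicator {0..y} t \<partial>lborel))"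
        by (intro mult_left_mono Rm_bound[OF Cn n0 ev True]) simp
      also have "\<dots> = ennreal (W * kern \<alpha> \<beta> \<xi> y * y ^ (n - 1) / fact (n - 1)) *
          (\<integral>\<^sup>+t. ennreal \<bar>Dsym (nderiv n f) x t\<bar> * indicator {0..y} t \<partial>lborel)"
        using W0 kp True by (simp add: ennreal_mult'[symmetric] mult.assoc[symmetric])
      also have "\<dots> = (\<integral>\<^sup>+t. ennreal (W * kern \<alpha> \<beta> \<xi> y * y ^ (n - 1) / fact (n - 1)) *
          (ennreal \<bar>Dsym (nderiv n f) x t\<bar> * indicator {0..y} t) \<partial>lborel)"
        by (rule nn_integral_cmult[symmetric]) (unfold Dsym_def, measurable)
      also have "\<dots> = (\<integral>\<^sup>+t. Hf n \<alpha> \<beta> \<xi> f x y t \<partial>lborel)"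
        unfolding Hf_def W_def[symmetric] using c0
        by (intro nn_integral_cong) (auto simp: indicator_def ennreal_mult'[symmetric])
      finally show ?thesis .
    qed
  qed
  finally show ?thesis .
qed

end



lemma poly_int:
  fixes \<xi> y :: real assumes \<xi>: "\<xi> > 0" and y: "y \<ge> 0"
  shows "(\<integral>\<^sup>+t. ennreal ((1 + t / \<xi>) ^ 2) * indicator {0..y} t \<partial>lborel) = ennreal (y + y ^ 2 / \<xi> + y ^ 3 / (3 * \<xi> ^ 2))"
proof -
  define F where "F = (\<lambda>t::real. t + t ^ 2 / \<xi> + t ^ 3 / (3 * \<xi> ^ 2))"
  have "((\<lambda>t. (1 + t / \<xi>) ^ 2) has_integral (F y - F 0)) {0..y}"
  proof (rule fundamental_theorem_of_calculus[OF y])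
    fix t assume "t \<in> {0..y}"
    have "(F has_real_derivative (1 + 2 * t / \<xi> + 3 * t ^ 2 / (3 * \<xi> ^ 2))) (at t)"
      unfolding F_def using \<xi> by (auto intro!: derivative_eq_intros simp: power2_eq_square)
    also have "1 + 2 * t / \<xi> + 3 * t ^ 2 / (3 * \<xi> ^ 2) = (1 + t / \<xi>) ^ 2"
      using \<xi> by (simp add: power2_eq_square field_simps)
    finally show "(F has_vector_derivative (1 + t / \<xi>) ^ 2) (at t within {0..y})"
      by (simp add: has_real_derivative_iff_has_vector_derivative has_vector_derivative_at_within)
  qed
  then have "((\<lambda>t. (1 + t / \<xi>) ^ 2) has_integral (y + y ^ 2 / \<xi> + y ^ 3 / (3 * \<xi> ^ 2))) {0..y}"
    by (simp add: F_def)
  from nn_integral_has_integral_lebesgue'[OF _ this] show ?thesis by simp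
qed

lemma final_alg:
  fixes W om F G1 G2 m0 m1 m2 r0 r1 r2 x :: real
  assumes "W * m0 = r0 * x ^ n / 2" "W * m1 = r1 * x ^ (n + 1) / 2" "W * m2 = r2 * x ^ (n + 2) / 2" "x > 0"
  shows "W * om / F * (m0 + 1 / x * m1 + 1 / (3 * x ^ 2) * m2)
       = 1 / (6 * F) * (3 * r0 + 3 * r1 + r2) * om * x ^ n"
proof -
  have "W * om / F * (m0 + 1 / x * m1 + 1 / (3 * x ^ 2) * m2)
      = om / F * (W * m0 + 1 / x * (W * m1) + 1 / (3 * x ^ 2) * (W * m2))"
    by (simp add: algebra_simps)
  also have "\<dots> = om / F * (r0 * x ^ n / 2 + 1 / x * (r1 * x ^ (n + 1) / 2) + 1 / (3 * x ^ 2) * (r2 * x ^ (n + 2) / 2))"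
    by (simp only: assms(1) assms(2) assms(3))
  also have "\<dots> = 1 / (6 * F) * (3 * r0 + 3 * r1 + r2) * om * x ^ n"
    using assms(4) by (simp add: power_add field_simps power2_eq_square)
  finally show ?thesis .
qed




lemma alg_rr: fixes F G1 G2 a b c om x :: real
  assumes "F \<noteq> 0" "G1 \<noteq> 0" "G2 \<noteq> 0"
  shows "1 / (6 * F) * (3 * (a / (G1 * G2)) + 3 * (b / (G1 * G2)) + c / (G1 * G2)) * om * x
       = 1 / (6 * G1 * G2 * F) * (3 * a + 3 * b + c) * om * x"
  using assms by (simp add: field_simps)

context setting begin

lemma L1_bound:
  assumes \<xi>: "\<xi> > 0"
  shows "L1norm (Kfun n \<alpha> \<beta> \<xi> f)
           \<le> ennreal (1 / (6 * Gamma (1 / (2 * real \<alpha>)) * Gamma (\<beta> - 1 / (2 * real \<alpha>)) * fact (n - 1))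
              * (3 * Gamma ((real n + 1) / (2 * real \<alpha>)) * Gamma (\<beta> - (real n + 1) / (2 * real \<alpha>))
                 + 3 * Gamma ((real n + 2) / (2 * real \<alpha>)) * Gamma (\<beta> - (real n + 2) / (2 * real \<alpha>))
                 + Gamma ((real n + 3) / (2 * real \<alpha>)) * Gamma (\<beta> - (real n + 3) / (2 * real \<alpha>)))
              * omega2 (nderiv n f) \<xi> * \<xi> ^ n)"
proof -
  define W where "W = Wconst \<alpha> \<beta> \<xi>"
  define \<omega> where "\<omega> = omega2 (nderiv n f) \<xi>"
  define cy where "cy = (\<lambda>y. W * kern \<alpha> \<beta> \<xi> y * y ^ (n - 1) / fact (n - 1))"
  define Q where "Q = (\<lambda>y. cy y * \<omega> * (y + y ^ 2 / \<xi> + y ^ 3 / (3 * \<xi> ^ 2)))"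
  define B where "B = (\<lambda>j y. indicator {0..} y * (y ^ j * kern \<alpha> \<beta> \<xi> y))"
  have W0: "W \<ge> 0" unfolding W_def using Wconst_pos[OF \<alpha>1 b1 \<xi>] by simp
  have \<omega>0: "\<omega> \<ge> 0" unfolding \<omega>_def using omega2_nonneg[OF gi] \<xi> by simp
  have cy0: "y \<ge> 0 \<Longrightarrow> cy y \<ge> 0" for y :: real 
  proof -
    assume y: "y \<ge> 0"
    have kp: "kern \<alpha> \<beta> \<xi> y > 0" by (rule kern_pos[OF \<xi>])
    show "cy y \<ge> 0" unfolding cy_def using W0 kp y by simp
  qed
  have gm: "nderiv n f \<in> borel_measurable borel" by (rule g_meas)
  have "L1norm (Kfun n \<alpha> \<beta> \<xi> f) \<le> (\<integral>\<^sup>+x. \<integral>\<^sup>+y. \<integral>\<^sup>+t. Hf n \<alpha> \<beta> \<xi> f x y t \<partial>lborel \<partial>lborel \<partial>lborel)"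
    unfolding L1norm_def by (intro nn_integral_mono K_pointwise[OF \<xi>])
  also have "\<dots> = (\<integral>\<^sup>+y. \<integral>\<^sup>+x. \<integral>\<^sup>+t. Hf n \<alpha> \<beta> \<xi> f x y t \<partial>lborel \<partial>lborel \<partial>lborel)"
    by (rule lborel_pair.Fubini'[OF G_meas, symmetric])
  also have "\<dots> = (\<integral>\<^sup>+y. \<integral>\<^sup>+t. \<integral>\<^sup>+x. Hf n \<alpha> \<beta> \<xi> f x y t \<partial>lborel \<partial>lborel \<partial>lborel)"
    by (intro nn_integral_cong lborel_pair.Fubini'[OF Hf_meas2, symmetric])
  also have "\<dots> \<le> (\<integral>\<^sup>+y. \<integral>\<^sup>+t. ennreal (cy y * \<omega> * (if 0 \<le> t \<and> t \<le> y then (1 + t / \<xi>) ^ 2 else 0)) \<partial>lborel \<partial>lborel)"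
  proof (intro nn_integral_mono)
    fix y t :: real
    show "(\<integral>\<^sup>+x. Hf n \<alpha> \<beta> \<xi> f x y t \<partial>lborel) \<le> ennreal (cy y * \<omega> * (if 0 \<le> t \<and> t \<le> y then (1 + t / \<xi>) ^ 2 else 0))"
    proof (cases "0 \<le> t \<and> t \<le> y")
      case True
      then have y0: "y \<ge> 0" by simp
      have "(\<integral>\<^sup>+x. Hf n \<alpha> \<beta> \<xi> f x y t \<partial>lborel) = (\<integral>\<^sup>+x. ennreal (cy y) * ennreal \<bar>Dsym (nderiv n f) x t\<bar> \<partial>lborel)"
        unfolding Hf_def using True cy0[OF y0] by (intro nn_integral_cong) (simp add: cy_def W_def ennreal_mult'[symmetric])
      also have "\<dots> = ennreal (cy y) * Delta2 (nderiv n f) t"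
        apply (subst nn_integral_cmult)
         apply (unfold Dsym_def; measurable)
        apply (simp add: Dsym_Delta2[OF gm])
        done
      also have "\<dots> \<le> ennreal (cy y) * ennreal ((1 + t / \<xi>) ^ 2 * \<omega>)"
        unfolding \<omega>_def by (intro mult_left_mono Delta2_dilate[OF gi \<xi>]) (use True in auto)
      also have "\<dots> = ennreal (cy y * \<omega> * (if 0 \<le> t \<and> t \<le> y then (1 + t / \<xi>) ^ 2 else 0))"
        using True cy0[OF y0] by (simp add: ennreal_mult'[symmetric] mult_ac)
      finally show ?thesis .
    next
      case False
      then have "\<And>x. Hf n \<alpha> \<beta> \<xi> f x y t = 0" unfolding Hf_def by auto
      then show ?thesis by simp
    qed
  qed
  also have "\<dots> = (\<integral>\<^sup>+y. ennreal (Q y) * indicator {0..} y \<partial>lborel)"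
  proof (intro nn_integral_cong)
    fix y :: real
    show "(\<integral>\<^sup>+t. ennreal (cy y * \<omega> * (if 0 \<le> t \<and> t \<le> y then (1 + t / \<xi>) ^ 2 else 0)) \<partial>lborel)
        = ennreal (Q y) * indicator {0..} y"
    proof (cases "y \<ge> 0")
      case True
      have "(\<integral>\<^sup>+t. ennreal (cy y * \<omega> * (if 0 \<le> t \<and> t \<le> y then (1 + t / \<xi>) ^ 2 else 0)) \<partial>lborel)
          = (\<integral>\<^sup>+t. ennreal (cy y * \<omega>) * (ennreal ((1 + t / \<xi>) ^ 2) * indicator {0..y} t) \<partial>lborel)"
        using cy0[OF True] \<omega>0 by (intro nn_integral_cong) (auto simp: indicator_def ennreal_mult')
      also have "\<dots> = ennreal (cy y * \<omega>) * ennreal (y + y ^ 2 / \<xi> + y ^ 3 / (3 * \<xi> ^ 2))"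
        by (subst nn_integral_cmult) (simp_all add: poly_int[OF \<xi> True])
      also have "\<dots> = ennreal (Q y) * indicator {0..} y"
        using True cy0[OF True] \<omega>0 \<xi> by (simp add: Q_def ennreal_mult'[symmetric] del: ennreal_plus)
      finally show ?thesis .
    next
      case False
      then have "\<And>t. (if 0 \<le> t \<and> t \<le> y then (1 + t / \<xi>) ^ 2 else 0) = (0::real)" by auto
      then show ?thesis using False by simp
    qed
  qed
  also have "\<dots> = ennreal (W * \<omega> / fact (n - 1) * ((\<integral>y. B n y \<partial>lborel) + 1 / \<xi> * (\<integral>y. B (n + 1) y \<partial>lborel)
        + 1 / (3 * \<xi> ^ 2) * (\<integral>y. B (n + 2) y \<partial>lborel)))"
  proof -
    have Bi: "integrable lborel (B j)" if "j \<le> n + 2" for j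
      unfolding B_def by (rule mom_integrable[OF \<alpha>1 \<xi> jb]) (use that in simp)
    have pw: "(\<lambda>y. indicator {0..} y * Q y) = (\<lambda>y. W * \<omega> / fact (n - 1) * (B n y + 1 / \<xi> * B (n + 1) y + 1 / (3 * \<xi> ^ 2) * B (n + 2) y))"
    proof -
      obtain m where nm: "n = Suc m" using n2 by (cases n) auto
      show ?thesis unfolding nm
        by (auto simp: fun_eq_iff Q_def cy_def B_def indicator_def field_simps power2_eq_square power3_eq_cube nm)
    qed
    have int: "integrable lborel (\<lambda>y. indicator {0..} y * Q y)"
      unfolding pw by (intro integrable_mult_right Bochner_Integration.integrable_add Bi) auto
    have "(\<integral>\<^sup>+y. ennreal (Q y) * indicator {0..} y \<partial>lborel) = (\<integral>\<^sup>+y. ennreal (indicator {0..} y * Q y) \<partial>lborel)"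
      by (intro nn_integral_cong) (auto simp: indicator_def)
    also have "\<dots> = ennreal (\<integral>y. indicator {0..} y * Q y \<partial>lborel)"
      by (rule nn_integral_eq_integral[OF int]) (use cy0 \<omega>0 \<xi> in \<open>auto simp: Q_def indicator_def\<close>)
    also have "(\<integral>y. indicator {0..} y * Q y \<partial>lborel) = W * \<omega> / fact (n - 1) * ((\<integral>y. B n y \<partial>lborel) + 1 / \<xi> * (\<integral>y. B (n + 1) y \<partial>lborel)
        + 1 / (3 * \<xi> ^ 2) * (\<integral>y. B (n + 2) y \<partial>lborel))"
      unfolding pw by (simp add: Bochner_Integration.integral_add Bi integrable_mult_right)
    finally show ?thesis .
  qed
  also have "\<dots> = ennreal (1 / (6 * Gamma (1 / (2 * real \<alpha>)) * Gamma (\<beta> - 1 / (2 * real \<alpha>)) * fact (n - 1))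
              * (3 * Gamma ((real n + 1) / (2 * real \<alpha>)) * Gamma (\<beta> - (real n + 1) / (2 * real \<alpha>))
                 + 3 * Gamma ((real n + 2) / (2 * real \<alpha>)) * Gamma (\<beta> - (real n + 2) / (2 * real \<alpha>))
                 + Gamma ((real n + 3) / (2 * real \<alpha>)) * Gamma (\<beta> - (real n + 3) / (2 * real \<alpha>)))
              * omega2 (nderiv n f) \<xi> * \<xi> ^ n)"
  proof -
    have m: "W * (\<integral>y. B j y \<partial>lborel) = rr \<alpha> \<beta> j * \<xi> ^ j / 2" if "j \<le> n + 2" for j
      unfolding W_def B_def by (rule mom_W_real[OF \<alpha>1 \<xi> jb]) (use that in simp)
    have G: "Gamma (1 / (2 * real \<alpha>)) \<noteq> 0" "Gamma (\<beta> - 1 / (2 * real \<alpha>)) \<noteq> 0"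
    proof -
      have "1 / (2 * real \<alpha>) > 0" using \<alpha>1 by simp
      then have "Gamma (1 / (2 * real \<alpha>)) > 0" by (rule Gamma_real_pos)
      moreover have "\<beta> - 1 / (2 * real \<alpha>) > 0" using b1 by simp
      then have "Gamma (\<beta> - 1 / (2 * real \<alpha>)) > 0" by (rule Gamma_real_pos)
      ultimately show "Gamma (1 / (2 * real \<alpha>)) \<noteq> 0" "Gamma (\<beta> - 1 / (2 * real \<alpha>)) \<noteq> 0" by auto
    qed
    have "W * \<omega> / fact (n - 1) * ((\<integral>y. B n y \<partial>lborel) + 1 / \<xi> * (\<integral>y. B (n + 1) y \<partial>lborel)
        + 1 / (3 * \<xi> ^ 2) * (\<integral>y. B (n + 2) y \<partial>lborel))
        = 1 / (6 * fact (n - 1)) * (3 * rr \<alpha> \<beta> n + 3 * rr \<alpha> \<beta> (n + 1) + rr \<alpha> \<beta> (n + 2)) * \<omega> * \<xi> ^ n"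
      by (rule final_alg) (use m \<xi> in auto)
    also have "\<dots> = 1 / (6 * Gamma (1 / (2 * real \<alpha>)) * Gamma (\<beta> - 1 / (2 * real \<alpha>)) * fact (n - 1))
              * (3 * Gamma ((real n + 1) / (2 * real \<alpha>)) * Gamma (\<beta> - (real n + 1) / (2 * real \<alpha>))
                 + 3 * Gamma ((real n + 2) / (2 * real \<alpha>)) * Gamma (\<beta> - (real n + 2) / (2 * real \<alpha>))
                 + Gamma ((real n + 3) / (2 * real \<alpha>)) * Gamma (\<beta> - (real n + 3) / (2 * real \<alpha>)))
              * \<omega> * \<xi> ^ n"
      unfolding rr_def using G by (subst alg_rr) (auto simp: mult.assoc add_ac)
    finally show ?thesis unfolding \<omega>_def by simp
  qed
  finally show ?thesis .
qed

end



context setting begin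

definition Cst where "Cst = 1 / (6 * Gamma (1 / (2 * real \<alpha>)) * Gamma (\<beta> - 1 / (2 * real \<alpha>)) * fact (n - 1))
              * (3 * Gamma ((real n + 1) / (2 * real \<alpha>)) * Gamma (\<beta> - (real n + 1) / (2 * real \<alpha>))
                 + 3 * Gamma ((real n + 2) / (2 * real \<alpha>)) * Gamma (\<beta> - (real n + 2) / (2 * real \<alpha>))
                 + Gamma ((real n + 3) / (2 * real \<alpha>)) * Gamma (\<beta> - (real n + 3) / (2 * real \<alpha>)))"

lemma Gpos: assumes "j \<le> (3::real)" "j \<ge> 0" shows "Gamma ((real n + j) / (2 * real \<alpha>)) > 0" "Gamma (\<beta> - (real n + j) / (2 * real \<alpha>)) > 0"
proof -
  have "(real n + j) / (2 * real \<alpha>) > 0" using assms n2 \<alpha>1 by simp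
  then show "Gamma ((real n + j) / (2 * real \<alpha>)) > 0" by (rule Gamma_real_pos)
  have "(real n + j) / (2 * real \<alpha>) \<le> (real n + 3) / (2 * real \<alpha>)" using assms \<alpha>1 by (simp add: divide_right_mono)
  then have "\<beta> - (real n + j) / (2 * real \<alpha>) > 0" using \<beta>b by simp
  then show "Gamma (\<beta> - (real n + j) / (2 * real \<alpha>)) > 0" by (rule Gamma_real_pos)
qed

lemma Cst_nonneg: "Cst \<ge> 0"
proof -
  have "1 / (2 * real \<alpha>) > 0" using \<alpha>1 by simp
  then have a: "Gamma (1 / (2 * real \<alpha>)) > 0" by (rule Gamma_real_pos)
  have "\<beta> - 1 / (2 * real \<alpha>) > 0" using b1 by simp
  then have b: "Gamma (\<beta> - 1 / (2 * real \<alpha>)) > 0" by (rule Gamma_real_pos)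
  show ?thesis unfolding Cst_def using a b Gpos[of 1] Gpos[of 2] Gpos[of 3]
    by (intro mult_nonneg_nonneg add_nonneg_nonneg) (auto simp: less_imp_le)
qed

lemma K_tendsto: "((\<lambda>\<eta>. L1norm (Kfun n \<alpha> \<beta> \<eta> f)) \<longlongrightarrow> 0) (at_right 0)"
proof (rule tendsto_sandwich[where f="\<lambda>_. 0" and h="\<lambda>\<eta>. ennreal (Cst * (4 * (\<integral>x. \<bar>nderiv n f x\<bar> \<partial>lborel)) * \<eta> ^ n)"])
  show "\<forall>\<^sub>F \<eta> in at_right 0. 0 \<le> L1norm (Kfun n \<alpha> \<beta> \<eta> f)" by simp
  show "\<forall>\<^sub>F \<eta> in at_right 0. L1norm (Kfun n \<alpha> \<beta> \<eta> f) \<le> ennreal (Cst * (4 * (\<integral>x. \<bar>nderiv n f x\<bar> \<partial>lborel)) * \<eta> ^ n)"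
  proof (rule eventually_mono[OF eventually_at_right_less])
    fix \<eta> :: real assume \<eta>: "0 < \<eta>"
    have "L1norm (Kfun n \<alpha> \<beta> \<eta> f) \<le> ennreal (Cst * omega2 (nderiv n f) \<eta> * \<eta> ^ n)"
      using L1_bound[OF \<eta>] unfolding Cst_def .
    also have "\<dots> \<le> ennreal (Cst * (4 * (\<integral>x. \<bar>nderiv n f x\<bar> \<partial>lborel)) * \<eta> ^ n)"
      using \<eta> Cst_nonneg omega2_le[OF gi, of \<eta>]
      by (intro ennreal_leI mult_right_mono mult_left_mono) auto
    finally show "L1norm (Kfun n \<alpha> \<beta> \<eta> f) \<le> ennreal (Cst * (4 * (\<integral>x. \<bar>nderiv n f x\<bar> \<partial>lborel)) * \<eta> ^ n)" .
  qed
  show "((\<lambda>_. 0) \<longlongrightarrow> (0::ennreal)) (at_right 0)" by simp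
  have "((\<lambda>\<eta>. ennreal (Cst * (4 * (\<integral>x. \<bar>nderiv n f x\<bar> \<partial>lborel)) * \<eta> ^ n)) \<longlongrightarrow>
        ennreal (Cst * (4 * (\<integral>x. \<bar>nderiv n f x\<bar> \<partial>lborel)) * 0 ^ n)) (at_right 0)"
    by (intro tendsto_ennrealI tendsto_intros)
  then show "((\<lambda>\<eta>. ennreal (Cst * (4 * (\<integral>x. \<bar>nderiv n f x\<bar> \<partial>lborel)) * \<eta> ^ n)) \<longlongrightarrow> 0) (at_right 0)"
    using n2 by (simp add: power_0_left)
qed

end



context setting begin

lemma nder_meas: "k \<le> n \<Longrightarrow> nderiv k f \<in> borel_measurable borel"
  by (rule borel_measurable_continuous_onI[OF Cn_cont[OF Cn]])

lemma Mxi_meas: "Mxi \<alpha> \<beta> \<eta> f \<in> borel_measurable borel"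
  unfolding Mxi_def by measurable

lemma K_meas: "Kfun n \<alpha> \<beta> \<eta> f \<in> borel_measurable borel"
  unfolding Kfun_def
  by (intro borel_measurable_diff Mxi_meas f_meas borel_measurable_sum borel_measurable_times
      borel_measurable_divide nder_meas borel_measurable_const) auto

lemma MF_tendsto:
  assumes hint: "\<forall>m\<in>{1..n div 2}. integrable lborel (nderiv (2 * m) f)"
  shows "((\<lambda>\<eta>. L1norm (\<lambda>x. Mxi \<alpha> \<beta> \<eta> f x - f x)) \<longlongrightarrow> 0) (at_right 0)"
proof -
  define cc where "cc = (\<lambda>\<rho>::nat. Gamma ((2 * real \<rho> + 1) / (2 * real \<alpha>)) * Gamma (\<beta> - (2 * real \<rho> + 1) / (2 * real \<alpha>))
             / (Gamma (1 / (2 * real \<alpha>)) * Gamma (\<beta> - 1 / (2 * real \<alpha>))))"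
  define T where "T = (\<lambda>\<rho> (\<eta>::real) x. nderiv (2 * \<rho>) f x / fact (2 * \<rho>) * cc \<rho> * \<eta> ^ (2 * \<rho>))"
  define nf where "nf = (\<lambda>\<rho>. \<integral>x. \<bar>nderiv (2 * \<rho>) f x\<bar> \<partial>lborel)"
  have Tm: "\<rho> \<in> {1..n div 2} \<Longrightarrow> T \<rho> \<eta> \<in> borel_measurable borel" for \<rho> \<eta>
    unfolding T_def by (intro borel_measurable_times borel_measurable_divide nder_meas borel_measurable_const) auto
  have MK: "Mxi \<alpha> \<beta> \<eta> f x - f x = Kfun n \<alpha> \<beta> \<eta> f x + (\<Sum>\<rho>=1..n div 2. T \<rho> \<eta> x)" for \<eta> x
    unfolding Kfun_def T_def cc_def by simp
  have Tint: "(\<integral>\<^sup>+x. ennreal \<bar>T \<rho> \<eta> x\<bar> \<partial>lborel) = ennreal (\<bar>cc \<rho>\<bar> / fact (2 * \<rho>) * \<bar>\<eta>\<bar> ^ (2 * \<rho>) * nf \<rho>)"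
    if \<rho>: "\<rho> \<in> {1..n div 2}" for \<rho> \<eta>
  proof -
    have ii: "integrable lborel (nderiv (2 * \<rho>) f)" using hint \<rho> by auto
    have "(\<integral>\<^sup>+x. ennreal \<bar>T \<rho> \<eta> x\<bar> \<partial>lborel) = (\<integral>\<^sup>+x. ennreal (\<bar>cc \<rho>\<bar> / fact (2 * \<rho>) * \<bar>\<eta>\<bar> ^ (2 * \<rho>)) * ennreal \<bar>nderiv (2 * \<rho>) f x\<bar> \<partial>lborel)"
      unfolding T_def by (intro nn_integral_cong) (simp add: ennreal_mult'[symmetric] abs_mult power_abs mult_ac)
    also have "\<dots> = ennreal (\<bar>cc \<rho>\<bar> / fact (2 * \<rho>) * \<bar>\<eta>\<bar> ^ (2 * \<rho>)) * L1norm (nderiv (2 * \<rho>) f)"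
      unfolding L1norm_def using ii by (subst nn_integral_cmult) auto
    also have "\<dots> = ennreal (\<bar>cc \<rho>\<bar> / fact (2 * \<rho>) * \<bar>\<eta>\<bar> ^ (2 * \<rho>) * nf \<rho>)"
      unfolding L1norm_integrable[OF ii] nf_def by (simp add: ennreal_mult'[symmetric])
    finally show ?thesis .
  qed
  define h where "h = (\<lambda>\<eta>. L1norm (Kfun n \<alpha> \<beta> \<eta> f) + (\<Sum>\<rho>=1..n div 2. ennreal (\<bar>cc \<rho>\<bar> / fact (2 * \<rho>) * \<bar>\<eta>\<bar> ^ (2 * \<rho>) * nf \<rho>)))"
  show ?thesis
  proof (rule tendsto_sandwich[where f="\<lambda>_. 0" and h=h])
    show "\<forall>\<^sub>F \<eta> in at_right 0. 0 \<le> L1norm (\<lambda>x. Mxi \<alpha> \<beta> \<eta> f x - f x)" by simp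
    show "\<forall>\<^sub>F \<eta> in at_right 0. L1norm (\<lambda>x. Mxi \<alpha> \<beta> \<eta> f x - f x) \<le> h \<eta>"
    proof (intro always_eventually allI)
      fix \<eta> :: real
      have "L1norm (\<lambda>x. Mxi \<alpha> \<beta> \<eta> f x - f x) \<le> (\<integral>\<^sup>+x. ennreal \<bar>Kfun n \<alpha> \<beta> \<eta> f x\<bar> + (\<Sum>\<rho>=1..n div 2. ennreal \<bar>T \<rho> \<eta> x\<bar>) \<partial>lborel)"
        unfolding L1norm_def
      proof (intro nn_integral_mono)
        fix x
        have "\<bar>Mxi \<alpha> \<beta> \<eta> f x - f x\<bar> \<le> \<bar>Kfun n \<alpha> \<beta> \<eta> f x\<bar> + (\<Sum>\<rho>=1..n div 2. \<bar>T \<rho> \<eta> x\<bar>)"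
          unfolding MK by (rule order_trans[OF abs_triangle_ineq]) (simp add: sum_abs)
        then have "ennreal \<bar>Mxi \<alpha> \<beta> \<eta> f x - f x\<bar> \<le> ennreal (\<bar>Kfun n \<alpha> \<beta> \<eta> f x\<bar> + (\<Sum>\<rho>=1..n div 2. \<bar>T \<rho> \<eta> x\<bar>))"
          by (rule ennreal_leI)
        also have "\<dots> = ennreal \<bar>Kfun n \<alpha> \<beta> \<eta> f x\<bar> + (\<Sum>\<rho>=1..n div 2. ennreal \<bar>T \<rho> \<eta> x\<bar>)"
          by (simp add: ennreal_plus sum_nonneg sum_ennreal)
        finally show "ennreal \<bar>Mxi \<alpha> \<beta> \<eta> f x - f x\<bar> \<le> ennreal \<bar>Kfun n \<alpha> \<beta> \<eta> f x\<bar> + (\<Sum>\<rho>=1..n div 2. ennreal \<bar>T \<rho> \<eta> x\<bar>)" .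
      qed
      also have "\<dots> = L1norm (Kfun n \<alpha> \<beta> \<eta> f) + (\<Sum>\<rho>=1..n div 2. \<integral>\<^sup>+x. ennreal \<bar>T \<rho> \<eta> x\<bar> \<partial>lborel)"
      proof -
        note K_meas[measurable]
        have ms: "(\<lambda>x. \<Sum>\<rho>=1..n div 2. ennreal \<bar>T \<rho> \<eta> x\<bar>) \<in> borel_measurable lborel"
          using Tm by (intro borel_measurable_sum) simp
        have ms1: "(\<lambda>x. ennreal \<bar>T \<rho> \<eta> x\<bar>) \<in> borel_measurable lborel" if "\<rho> \<in> {1..n div 2}" for \<rho>
          using Tm[OF that] by simp
        show ?thesis unfolding L1norm_def
          apply (subst nn_integral_add)
            apply measurable[1]
           apply (rule ms)
          apply (subst nn_integral_sum)
           apply (erule ms1)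
          apply (rule refl)
          done
      qed
      also have "\<dots> = h \<eta>" unfolding h_def by (simp add: Tint)
      finally show "L1norm (\<lambda>x. Mxi \<alpha> \<beta> \<eta> f x - f x) \<le> h \<eta>" .
    qed
    show "((\<lambda>_. 0) \<longlongrightarrow> (0::ennreal)) (at_right 0)" by simp
    have "(h \<longlongrightarrow> 0 + (\<Sum>\<rho>=1..n div 2. ennreal (\<bar>cc \<rho>\<bar> / fact (2 * \<rho>) * \<bar>0\<bar> ^ (2 * \<rho>) * nf \<rho>))) (at_right 0)"
      unfolding h_def by (intro tendsto_add K_tendsto tendsto_sum tendsto_ennrealI tendsto_intros)
    moreover have "(\<Sum>\<rho>=1..n div 2. ennreal (\<bar>cc \<rho>\<bar> / fact (2 * \<rho>) * \<bar>0::real\<bar> ^ (2 * \<rho>) * nf \<rho>)) = 0"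
      by (intro sum.neutral) (auto simp: power_0_left)
    ultimately show "(h \<longlongrightarrow> 0) (at_right 0)" by simp
  qed
qed

end

theorem theorem4:
  fixes n \<alpha> :: nat and \<beta> \<xi> :: real and f :: "real \<Rightarrow> real"
  assumes "even n" and "n \<ge> 2" and "\<alpha> \<ge> 1"
    and "\<beta> > (real n + 3) / (2 * real \<alpha>)"
    and "Cn n f" and "integrable lborel (nderiv n f)"
    and "\<xi> > 0"
  shows "L1norm (Kfun n \<alpha> \<beta> \<xi> f)
           \<le> ennreal (1 / (6 * Gamma (1 / (2 * real \<alpha>)) * Gamma (\<beta> - 1 / (2 * real \<alpha>)) * fact (n - 1))
              * (3 * Gamma ((real n + 1) / (2 * real \<alpha>)) * Gamma (\<beta> - (real n + 1) / (2 * real \<alpha>))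
                 + 3 * Gamma ((real n + 2) / (2 * real \<alpha>)) * Gamma (\<beta> - (real n + 2) / (2 * real \<alpha>))
                 + Gamma ((real n + 3) / (2 * real \<alpha>)) * Gamma (\<beta> - (real n + 3) / (2 * real \<alpha>)))
              * omega2 (nderiv n f) \<xi> * \<xi> ^ n)
         \<and> ((\<lambda>\<eta>. L1norm (Kfun n \<alpha> \<beta> \<eta> f)) \<longlongrightarrow> 0) (at_right 0)
         \<and> ((\<forall>m\<in>{1..n div 2}. integrable lborel (nderiv (2 * m) f)) \<longrightarrow>
           ((\<lambda>\<eta>. L1norm (\<lambda>x. Mxi \<alpha> \<beta> \<eta> f x - f x)) \<longlongrightarrow> 0) (at_right 0))"
  proof -
  interpret setting n \<alpha> \<beta> f using assms by unfold_locales auto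
  show ?thesis using L1_bound[OF assms(7)] K_tendsto MF_tendsto by blast
qed

end
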